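(* Let $\varphi\in\mathcal{C}^\infty(S^1,\mathbb{R})$, $\beta\ge0$ and $g\in\mathcal{G}$. (i) The sum defining $V^0_\varphi(g)$ is absolutely convergent; more precisely $$|V^0_\varphi(g)|\le\sum_{a\in J_g}\Big|\frac{\varphi'(g(a+))+\varphi'(g(a-))}{2}-\frac{\varphi(g(a+))-\varphi(g(a-))}{g(a+)-g(a-)}\Big|\le\frac12\int_{S^1}|\varphi''(x)|dx,$$ and $|V^\beta_\varphi(g)|\le(1/2+\beta)\int_{S^1}|\varphi''(x)|dx$. (ii) $$V^\beta_\varphi(g)=\frac{\partial}{\partial t}Y^\beta_{e_{t\varphi}}(g)\Big|_{t=0}=\frac{\partial}{\partial t}Y^\beta_{e+t\varphi}(g)\Big|_{t=0}.$$
   Context: $S^1=\mathbb{R}/\mathbb{Z}$; for $x,y\in S^1$, $y-x$ denotes the length of the positively oriented arc from $x$ to $y$. $\mathcal{G}$ is the set of maps $g:S^1\to S^1$ induced by right continuous nondecreasing $\tilde g:\mathbb{R}\to\mathbb{R}$ with $\tilde g(x+1)=\tilde g(x)+1$; $J_g$ is its set of jump locations and $g(a\pm)$ the one-sided limits. For $\varphi\in\mathcal{C}^\infty(S^1,\mathbb{R})$, $e_{t\varphi}$ denotes the time-$t$ map of the flow of the ODE $\dot x_t=\varphi(x_t)$ on $S^1$, and $e+t\varphi$ the map $x\mapsto x+t\varphi(x)$ (a diffeomorphism for small $|t|$). Define $$V^0_\varphi(g):=\sum_{a\in J_g}\Big[\frac{\varphi'(g(a+))+\varphi'(g(a-))}{2}-\frac{\varphi(g(a+))-\varphi(g(a-))}{g(a+)-g(a-)}\Big],\qquad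 V^\beta_\varphi(g):=V^0_\varphi(g)+\beta\int_{S^1}\varphi'(g(x))dx.$$ For an orientation preserving $\mathcal{C}^2$-diffeomorphism $h$ of $S^1$: $\frac{\delta(h\circ g)}{\delta g}(a):=\frac{h(g(a+))-h(g(a-))}{g(a+)-g(a-)}$, $Y_h^0(g):=\prod_{a\in J_g}\sqrt{h'(g(a-))h'(g(a+))}\big/\frac{\delta(h\circ g)}{\delta g}(a)$, $X_h^\beta(g):=\exp(\beta\int_0^1\log h'(g(s))ds)$ and $Y^\beta_h:=X^\beta_h\cdot Y^0_h$. *)

theory Defs
  imports "HOL-Analysis.Analysis"
begin

(* Circle maps are represented by their lifts to the real line. *)

definition smooth_periodic :: "(real \<Rightarrow> real) \<Rightarrow> bool" where
  "smooth_periodic \<phi> \<longleftrightarrow> (\<forall>x. \<phi> (x + 1) = \<phi> x) \<and>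
     (\<forall>k x. ((deriv ^^ k) \<phi>) differentiable (at x))"

definition in_G :: "(real \<Rightarrow> real) \<Rightarrow> bool" where
  "in_G g \<longleftrightarrow> mono g \<and> (\<forall>x. g (x + 1) = g x + 1) \<and>
     (\<forall>x. continuous (at_right x) g)"

(* left limit g(a-) ; g(a+) = g a by right continuity *)
definition gminus :: "(real \<Rightarrow> real) \<Rightarrow> real \<Rightarrow> real" where
  "gminus g a = Lim (at_left a) g"

(* jump set J_g, represented by points of the fundamental domain [0,1) *)
definition jumps :: "(real \<Rightarrow> real) \<Rightarrow> real set" where
  "jumps g = {a \<in> {0..<1}. gminus g a \<noteq> g a}"

definition V0_term :: "(real \<Rightarrow> real) \<Rightarrow> (real \<Rightarrow> real) \<Rightarrow> real \<Rightarrow> real" where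
  "V0_term \<phi> g a =
     (deriv \<phi> (g a) + deriv \<phi> (gminus g a)) / 2
     - (\<phi> (g a) - \<phi> (gminus g a)) / (g a - gminus g a)"

definition V0 :: "(real \<Rightarrow> real) \<Rightarrow> (real \<Rightarrow> real) \<Rightarrow> real" where
  "V0 \<phi> g = (\<Sum>\<^sub>\<infinity>a\<in>jumps g. V0_term \<phi> g a)"

definition Vbeta :: "real \<Rightarrow> (real \<Rightarrow> real) \<Rightarrow> (real \<Rightarrow> real) \<Rightarrow> real" where
  "Vbeta \<beta> \<phi> g = V0 \<phi> g + \<beta> * integral {0..1} (\<lambda>x. deriv \<phi> (g x))"

definition has_prod_on :: "('a \<Rightarrow> real) \<Rightarrow> 'a set \<Rightarrow> real \<Rightarrow> bool" where
  "has_prod_on f A P \<longleftrightarrow> ((\<lambda>F. prod f F) \<longlongrightarrow> P) (finite_subsets_at_top A)"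

definition infprod_on :: "('a \<Rightarrow> real) \<Rightarrow> 'a set \<Rightarrow> real" where
  "infprod_on f A = Lim (finite_subsets_at_top A) (\<lambda>F. prod f F)"

definition flow :: "(real \<Rightarrow> real) \<Rightarrow> real \<Rightarrow> real \<Rightarrow> real" where
  "flow \<phi> t x = (THE u. u 0 = x \<and> (\<forall>s. (u has_real_derivative \<phi> (u s)) (at s))) t"

definition lin_map :: "(real \<Rightarrow> real) \<Rightarrow> real \<Rightarrow> real \<Rightarrow> real" where
  "lin_map \<phi> t x = x + t * \<phi> x"

definition delta_quot :: "(real \<Rightarrow> real) \<Rightarrow> (real \<Rightarrow> real) \<Rightarrow> real \<Rightarrow> real" where
  "delta_quot h g a = (h (g a) - h (gminus g a)) / (g a - gminus g a)"

definition Y0 :: "(real \<Rightarrow> real) \<Rightarrow> (real \<Rightarrow> real) \<Rightarrow> real" where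
  "Y0 h g = infprod_on
     (\<lambda>a. sqrt (deriv h (gminus g a) * deriv h (g a)) / delta_quot h g a) (jumps g)"

definition Xbeta :: "real \<Rightarrow> (real \<Rightarrow> real) \<Rightarrow> (real \<Rightarrow> real) \<Rightarrow> real" where
  "Xbeta \<beta> h g = exp (\<beta> * integral {0..1} (\<lambda>s. ln (deriv h (g s))))"

definition Ybeta :: "real \<Rightarrow> (real \<Rightarrow> real) \<Rightarrow> (real \<Rightarrow> real) \<Rightarrow> real" where
  "Ybeta \<beta> h g = Xbeta \<beta> h g * Y0 h g"

end

theory Submission
  imports Defs
begin

lemma periodic_int:
  fixes f :: "real \<Rightarrow> 'b"
  assumes p: "\<And>x. f (x + 1) = f x"
  shows "f (x + real_of_int k) = f x"
proof -
  have pos: "f (y + real n) = f y" for y n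
  proof (induction n)
    case (Suc n)
    have "f (y + real (Suc n)) = f ((y + real n) + 1)" by (simp add: algebra_simps)
    also have "\<dots> = f y" using p Suc by simp
    finally show ?case .
  qed simp
  show ?thesis
  proof (cases "k \<ge> 0")
    case True
    then show ?thesis using pos[of x "nat k"] by simp
  next
    case False
    then have "x = (x + real_of_int k) + real (nat (-k))" by simp
    then show ?thesis using pos[of "x + real_of_int k" "nat (-k)"] by metis
  qed
qed

lemma periodic_bounded:
  fixes f :: "real \<Rightarrow> real"
  assumes c: "continuous_on UNIV f" and p: "\<And>x. f (x + 1) = f x"
  shows "\<exists>M. \<forall>x. \<bar>f x\<bar> \<le> M"
proof -
  have "compact (f ` {0..1})"
    by (rule compact_continuous_image) (auto intro: continuous_on_subset[OF c])
  then obtain M where M: "\<forall>y\<in>f ` {0..1}. norm y \<le> M"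
    using compact_imp_bounded bounded_iff by blast
  have "\<bar>f x\<bar> \<le> M" for x
  proof -
    have "f x = f (x - real_of_int \<lfloor>x\<rfloor> + real_of_int \<lfloor>x\<rfloor>)" by simp
    also have "\<dots> = f (x - real_of_int \<lfloor>x\<rfloor>)" by (rule periodic_int[of f, OF p])
    finally have "f x = f (x - real_of_int \<lfloor>x\<rfloor>)" .
    moreover have "x - real_of_int \<lfloor>x\<rfloor> \<in> {0..1}"
      by (auto simp: floor_le_iff) linarith
    ultimately show ?thesis using M by force
  qed
  then show ?thesis by blast
qed

lemma deriv_periodic:
  fixes f :: "real \<Rightarrow> real"
  assumes p: "\<And>x. f (x + 1) = f x" and d: "\<And>x. f differentiable (at x)"
  shows "deriv f (x + 1) = deriv f x"
proof -
  have "DERIV f (x + 1) :> deriv f (x + 1)"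
    using d DERIV_deriv_iff_real_differentiable by blast
  then have "DERIV (\<lambda>x. f (x + 1)) x :> deriv f (x + 1)" by (simp add: DERIV_shift)
  then have "DERIV f x :> deriv f (x + 1)" using p by simp
  moreover have "DERIV f x :> deriv f x"
    using d DERIV_deriv_iff_real_differentiable by blast
  ultimately show ?thesis using DERIV_unique by blast
qed

lemma mvt_bound_ivl:
  fixes f :: "real \<Rightarrow> real"
  assumes "a \<le> b" and der: "\<And>x. a \<le> x \<Longrightarrow> x \<le> b \<Longrightarrow> DERIV f x :> f' x"
    and bd: "\<And>x. a \<le> x \<Longrightarrow> x \<le> b \<Longrightarrow> \<bar>f' x\<bar> \<le> C"
  shows "\<bar>f b - f a\<bar> \<le> C * (b - a)"
proof (cases "a = b")
  case True then show ?thesis by simp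
next
  case False
  then have "a < b" using assms by simp
  from MVT2[OF this der] obtain z where z: "a < z" "z < b" "f b - f a = (b - a) * f' z"
    by blast
  have "\<bar>f b - f a\<bar> = (b - a) * \<bar>f' z\<bar>" using z \<open>a < b\<close> by (simp add: abs_mult)
  also have "\<dots> \<le> (b - a) * C" using bd[of z] z \<open>a < b\<close> by (intro mult_left_mono) auto
  finally show ?thesis by (simp add: mult.commute)
qed

lemma mvt_bound:
  fixes f :: "real \<Rightarrow> real"
  assumes der: "\<And>x. DERIV f x :> f' x" and bd: "\<And>x. \<bar>f' x\<bar> \<le> C"
  shows "\<bar>f a - f b\<bar> \<le> C * \<bar>a - b\<bar>"
proof (cases "a \<le> b")
  case True
  from mvt_bound_ivl[OF True der bd] True show ?thesis by (simp add: abs_minus_commute)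
next
  case False
  then have "b \<le> a" by simp
  from mvt_bound_ivl[OF this der bd] False show ?thesis by simp
qed

lemma mvt_bound0:
  fixes f :: "real \<Rightarrow> real"
  assumes der: "\<And>x. DERIV f x :> f' x" and bd: "\<And>s. \<bar>s\<bar> \<le> \<bar>t\<bar> \<Longrightarrow> \<bar>f' s\<bar> \<le> C"
  shows "\<bar>f t - f 0\<bar> \<le> C * \<bar>t\<bar>"
proof (cases "0 \<le> t")
  case True
  from mvt_bound_ivl[OF True der, of C] bd True show ?thesis by force
next
  case False
  then have "t \<le> 0" by simp
  from mvt_bound_ivl[OF this der, of C] bd False
  have "\<bar>f 0 - f t\<bar> \<le> C * (0 - t)" by force
  then show ?thesis using False by (simp add: abs_minus_commute)
qed

lemma smooth_data:
  assumes "smooth_periodic \<phi>"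
  shows "\<forall>x. \<phi> (x + 1) = \<phi> x"
    and "\<forall>x. DERIV \<phi> x :> deriv \<phi> x"
    and "\<forall>x. DERIV (deriv \<phi>) x :> deriv (deriv \<phi>) x"
    and "\<forall>x. DERIV (deriv (deriv \<phi>)) x :> deriv (deriv (deriv \<phi>)) x"
    and "\<forall>x. DERIV (deriv (deriv (deriv \<phi>))) x :> deriv (deriv (deriv (deriv \<phi>))) x"
    and "\<forall>x. deriv \<phi> (x + 1) = deriv \<phi> x"
    and "\<forall>x. deriv (deriv \<phi>) (x + 1) = deriv (deriv \<phi>) x"
    and "\<forall>x. deriv (deriv (deriv \<phi>)) (x + 1) = deriv (deriv (deriv \<phi>)) x"
proof -
  have p: "\<And>x. \<phi> (x + 1) = \<phi> x" and d: "\<And>k x. ((deriv ^^ k) \<phi>) differentiable (at x)"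
    using assms unfolding smooth_periodic_def by auto
  have d0: "\<And>x. \<phi> differentiable (at x)" using d[of 0] by simp
  have d1: "\<And>x. deriv \<phi> differentiable (at x)" using d[of 1] by simp
  have d2: "\<And>x. deriv (deriv \<phi>) differentiable (at x)" using d[of 2] by (simp add: numeral_2_eq_2)
  have d3: "\<And>x. deriv (deriv (deriv \<phi>)) differentiable (at x)"
    using d[of 3] by (simp add: numeral_3_eq_3)
  show "\<forall>x. \<phi> (x + 1) = \<phi> x" using p by blast
  show "\<forall>x. DERIV \<phi> x :> deriv \<phi> x" using d0 DERIV_deriv_iff_real_differentiable by blast
  show "\<forall>x. DERIV (deriv \<phi>) x :> deriv (deriv \<phi>) x" using d1 DERIV_deriv_iff_real_differentiable by blast
  show "\<forall>x. DERIV (deriv (deriv \<phi>)) x :> deriv (deriv (deriv \<phi>)) x"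
    using d2 DERIV_deriv_iff_real_differentiable by blast
  show "\<forall>x. DERIV (deriv (deriv (deriv \<phi>))) x :> deriv (deriv (deriv (deriv \<phi>))) x"
    using d3 DERIV_deriv_iff_real_differentiable by blast
  have p1: "\<And>x. deriv \<phi> (x + 1) = deriv \<phi> x" using deriv_periodic[OF p d0] .
  have p2: "\<And>x. deriv (deriv \<phi>) (x + 1) = deriv (deriv \<phi>) x" using deriv_periodic[OF p1 d1] .
  have p3: "\<And>x. deriv (deriv (deriv \<phi>)) (x + 1) = deriv (deriv (deriv \<phi>)) x"
    using deriv_periodic[OF p2 d2] .
  show "\<forall>x. deriv \<phi> (x + 1) = deriv \<phi> x" using p1 by blast
  show "\<forall>x. deriv (deriv \<phi>) (x + 1) = deriv (deriv \<phi>) x" using p2 by blast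
  show "\<forall>x. deriv (deriv (deriv \<phi>)) (x + 1) = deriv (deriv (deriv \<phi>)) x" using p3 by blast
qed

lemma DERIV_cont_on: "(\<And>x. DERIV f x :> f' x) \<Longrightarrow> continuous_on UNIV f"
  by (meson DERIV_isCont continuous_at_imp_continuous_on)

lemma smooth_bounds:
  assumes "smooth_periodic \<phi>"
  shows "\<exists>M. \<forall>x. \<bar>\<phi> x\<bar> \<le> M" "\<exists>M. \<forall>x. \<bar>deriv \<phi> x\<bar> \<le> M"
    "\<exists>M. \<forall>x. \<bar>deriv (deriv \<phi>) x\<bar> \<le> M" "\<exists>M. \<forall>x. \<bar>deriv (deriv (deriv \<phi>)) x\<bar> \<le> M"
  using smooth_data[OF assms]
  by (auto intro!: periodic_bounded DERIV_cont_on)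

lemma gminus_Sup:
  fixes g :: "real \<Rightarrow> real"
  assumes "mono g"
  shows "gminus g a = Sup (g ` {..<a})"
proof -
  let ?S = "Sup (g ` {..<a})"
  have bdd: "bdd_above (g ` {..<a})"
    by (rule bdd_aboveI[of _ "g a"]) (auto intro: monoD[OF assms])
  have ne: "g ` {..<a} \<noteq> {}" by (auto intro: exI[of _ "a - 1"])
  have "(g \<longlongrightarrow> ?S) (at_left a)"
  proof (rule order_tendstoI)
    fix y assume "y < ?S"
    then obtain x0 where x0: "x0 < a" "y < g x0"
      using less_cSup_iff[OF ne bdd] by auto
    have "\<forall>\<^sub>F x in at_left a. x \<in> {x0<..<a}" by (rule eventually_at_left_real[OF x0(1)])
    then show "\<forall>\<^sub>F x in at_left a. y < g x"
    proof (rule eventually_mono)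
      fix x assume "x \<in> {x0<..<a}"
      then have "g x0 \<le> g x" by (auto intro: monoD[OF assms])
      then show "y < g x" using x0 by simp
    qed
  next
    fix y assume "?S < y"
    have "\<forall>\<^sub>F x in at_left a. x < a" by (simp add: eventually_at_filter)
    then show "\<forall>\<^sub>F x in at_left a. g x < y"
    proof (rule eventually_mono)
      fix x assume "x < a"
      then have "g x \<le> ?S" using bdd by (auto intro: cSup_upper)
      then show "g x < y" using \<open>?S < y\<close> by simp
    qed
  qed
  then show ?thesis unfolding gminus_def using tendsto_Lim trivial_limit_at_left_real by blast
qed

lemma gminus_ge:
  assumes "mono g" "x < a"
  shows "g x \<le> gminus g a"
proof -
  have bdd: "bdd_above (g ` {..<a})"
    by (rule bdd_aboveI[of _ "g a"]) (auto intro: monoD[OF assms(1)])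
  show ?thesis unfolding gminus_Sup[OF assms(1)] using assms(2) bdd by (auto intro: cSup_upper)
qed

lemma gminus_le:
  assumes "mono g" "\<And>x. x < a \<Longrightarrow> g x \<le> M"
  shows "gminus g a \<le> M"
  unfolding gminus_Sup[OF assms(1)] using assms(2)
  by (intro cSup_least) (auto intro: exI[of _ "a - 1"])

lemma gminus_le_g: "mono g \<Longrightarrow> gminus g a \<le> g a"
  by (rule gminus_le) (auto intro: monoD)

lemma in_G_facts:
  assumes "in_G g"
  shows "mono g" "\<And>x. g (x + 1) = g x + 1"
  using assms unfolding in_G_def by auto

lemma jump_pos: assumes "in_G g" "a \<in> jumps g" shows "gminus g a < g a"
proof -
  have "gminus g a \<le> g a" by (rule gminus_le_g[OF in_G_facts(1)[OF assms(1)]])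
  then show ?thesis using assms(2) unfolding jumps_def by auto
qed

lemma jump_le1: assumes "in_G g" shows "g a - gminus g a \<le> 1"
proof -
  have "g (a - 1) \<le> gminus g a" by (rule gminus_ge[OF in_G_facts(1)[OF assms]]) simp
  moreover have "g (a - 1 + 1) = g (a - 1) + 1" by (rule in_G_facts(2)[OF assms])
  ultimately show ?thesis by simp
qed

lemma jump_range:
  assumes "in_G g" "a \<in> jumps g"
  shows "gminus g 0 \<le> gminus g a" "g a \<le> gminus g 0 + 1"
proof -
  have m: "mono g" using in_G_facts(1)[OF assms(1)] .
  have a: "0 \<le> a" "a < 1" using assms(2) unfolding jumps_def by auto
  show "gminus g 0 \<le> gminus g a"
    by (rule gminus_le[OF m]) (use a in \<open>auto intro: gminus_ge[OF m]\<close>)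
  have "g a \<le> gminus g 1" by (rule gminus_ge[OF m a(2)])
  also have "gminus g 1 \<le> gminus g 0 + 1"
  proof (rule gminus_le[OF m])
    fix x :: real assume "x < 1"
    have "g (x - 1) \<le> gminus g 0" by (rule gminus_ge[OF m]) (use \<open>x < 1\<close> in simp)
    moreover have "g (x - 1 + 1) = g (x - 1) + 1" by (rule in_G_facts(2)[OF assms(1)])
    ultimately show "g x \<le> gminus g 0 + 1" by simp
  qed
  finally show "g a \<le> gminus g 0 + 1" .
qed

lemma jump_order:
  assumes "in_G g" "a < b"
  shows "g a \<le> gminus g b"
  by (rule gminus_ge[OF in_G_facts(1)[OF assms(1)] assms(2)])


lemma antideriv_exists:
  fixes w :: "real \<Rightarrow> real"
  assumes "continuous_on UNIV w"
  shows "\<exists>W. \<forall>x. DERIV W x :> w x"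
proof -
  have "\<exists>F. \<forall>x. -\<infinity> < ereal x \<longrightarrow> ereal x < \<infinity> \<longrightarrow> (F has_vector_derivative w x) (at x)"
    by (rule einterval_antiderivative) (use assms in \<open>auto simp: continuous_on_eq_continuous_at\<close>)
  then show ?thesis by (auto simp: has_real_derivative_iff_has_vector_derivative)
qed

lemma deriv_compare:
  fixes K R :: "real \<Rightarrow> real"
  assumes "a \<le> b"
    and dK: "\<And>x. a \<le> x \<Longrightarrow> x \<le> b \<Longrightarrow> DERIV K x :> K' x"
    and dR: "\<And>x. a \<le> x \<Longrightarrow> x \<le> b \<Longrightarrow> DERIV R x :> R' x"
    and le: "\<And>x. a \<le> x \<Longrightarrow> x \<le> b \<Longrightarrow> \<bar>K' x\<bar> \<le> R' x"
  shows "\<bar>K b - K a\<bar> \<le> R b - R a"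
proof -
  have "(\<lambda>x. R x - K x) a \<le> (\<lambda>x. R x - K x) b"
    using assms(1)
  proof (rule DERIV_nonneg_imp_nondecreasing)
    fix x assume x: "a \<le> x" "x \<le> b"
    show "\<exists>y. DERIV (\<lambda>x. R x - K x) x :> y \<and> 0 \<le> y"
      using DERIV_diff[OF dR[OF x] dK[OF x]] le[OF x] by (intro exI[of _ "R' x - K' x"]) auto
  qed
  moreover have "(\<lambda>x. R x + K x) a \<le> (\<lambda>x. R x + K x) b"
    using assms(1)
  proof (rule DERIV_nonneg_imp_nondecreasing)
    fix x assume x: "a \<le> x" "x \<le> b"
    show "\<exists>y. DERIV (\<lambda>x. R x + K x) x :> y \<and> 0 \<le> y"
      using DERIV_add[OF dR[OF x] dK[OF x]] le[OF x] by (intro exI[of _ "R' x + K' x"]) auto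
  qed
  ultimately show ?thesis by simp
qed

lemma W_mono:
  fixes W w :: "real \<Rightarrow> real"
  assumes dW: "\<And>x. DERIV W x :> w x" and w0: "\<And>x. 0 \<le> w x" and "a \<le> b"
  shows "W a \<le> W b"
  using assms(3) by (rule DERIV_nonneg_imp_nondecreasing) (use dW w0 in \<open>blast intro: exI[of _ "w _"]\<close>)

lemma W_integral:
  fixes W w :: "real \<Rightarrow> real"
  assumes dW: "\<And>x. DERIV W x :> w x" and "a \<le> b"
  shows "integral {a..b} w = W b - W a"
proof -
  have "(w has_integral (W b - W a)) {a..b}"
    using assms(2) by (rule fundamental_theorem_of_calculus)
      (use dW in \<open>auto simp: has_real_derivative_iff_has_vector_derivative[symmetric]
            intro: has_field_derivative_at_within\<close>)
  then show ?thesis by (rule integral_unique)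
qed

lemma W_periodic:
  fixes W w :: "real \<Rightarrow> real"
  assumes dW: "\<And>x. DERIV W x :> w x" and p: "\<And>x. w (x + 1) = w x"
  shows "W (c + 1) - W c = W 1 - W 0"
proof -
  have "\<forall>x. DERIV (\<lambda>x. W (x + 1) - W x) x :> 0"
  proof
    fix x
    have "DERIV (\<lambda>x. W (x + 1)) x :> w (x + 1)"
      using dW[of "x + 1"] by (simp add: DERIV_shift)
    then have "DERIV (\<lambda>x. W (x + 1) - W x) x :> w (x + 1) - w x"
      using dW by (intro DERIV_diff) auto
    then show "DERIV (\<lambda>x. W (x + 1) - W x) x :> 0" using p by simp
  qed
  then show ?thesis using DERIV_isconst_all[of "\<lambda>x. W (x + 1) - W x" c 0] by simp
qed

lemma telescope_le:
  fixes F :: "real set" and P Q W :: "real \<Rightarrow> real"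
  assumes "finite F" and Wm: "\<And>x y. x \<le> y \<Longrightarrow> W x \<le> W y"
  shows "(\<forall>a\<in>F. c \<le> P a \<and> P a \<le> Q a \<and> Q a \<le> e) \<Longrightarrow>
         (\<forall>a\<in>F. \<forall>b\<in>F. a < b \<longrightarrow> Q a \<le> P b) \<Longrightarrow> c \<le> e \<Longrightarrow>
         (\<Sum>a\<in>F. W (Q a) - W (P a)) \<le> W e - W c"
  using assms(1)
proof (induction F arbitrary: e rule: finite_linorder_max_induct)
  case empty
  then show ?case using Wm[of c e] by simp
next
  case (insert m F)
  have IH: "(\<Sum>a\<in>F. W (Q a) - W (P a)) \<le> W (P m) - W c"
    using insert.prems insert.hyps by (intro insert.IH) auto
  have "W (Q m) \<le> W e" using insert.prems by (intro Wm) auto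
  have "m \<notin> F" using insert.hyps by auto
  then show ?case using IH insert.hyps \<open>W (Q m) \<le> W e\<close> by (simp add: sum.insert)
qed

lemma trapezoid_bound:
  fixes \<phi> \<psi> \<psi>2 W :: "real \<Rightarrow> real"
  assumes d1: "\<And>x. DERIV \<phi> x :> \<psi> x" and d2: "\<And>x. DERIV \<psi> x :> \<psi>2 x"
    and dW: "\<And>x. DERIV W x :> \<bar>\<psi>2 x\<bar>" and "p < q"
  shows "\<bar>(\<psi> q + \<psi> p) / 2 - (\<phi> q - \<phi> p) / (q - p)\<bar> \<le> (W q - W p) / 2"
proof -
  have psi_b: "\<bar>\<psi> x - \<psi> p\<bar> \<le> W x - W p" if "p \<le> x" for x
    using that by (rule deriv_compare) (use d2 dW in auto)
  define K where "K x = (x - p) * (\<psi> p + \<psi> x) / 2 - (\<phi> x - \<phi> p)" for x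
  define R where "R x = (x - p) * (W x - W p) / 2" for x
  have dK: "DERIV K x :> (\<psi> p + \<psi> x) / 2 + (x - p) * \<psi>2 x / 2 - \<psi> x" for x
    unfolding K_def by (auto intro!: derivative_eq_intros d1 d2 simp: field_simps)
  have dR: "DERIV R x :> (W x - W p) / 2 + (x - p) * \<bar>\<psi>2 x\<bar> / 2" for x
    unfolding R_def by (auto intro!: derivative_eq_intros dW simp: field_simps)
  have "\<bar>K q - K p\<bar> \<le> R q - R p"
  proof (rule deriv_compare[OF _ dK dR])
    fix x assume x: "p \<le> x" "x \<le> q"
    have "\<bar>(\<psi> p + \<psi> x) / 2 + (x - p) * \<psi>2 x / 2 - \<psi> x\<bar>
          \<le> \<bar>\<psi> x - \<psi> p\<bar> / 2 + (x - p) * \<bar>\<psi>2 x\<bar> / 2"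
    proof -
      have e: "(\<psi> p + \<psi> x) / 2 + (x - p) * \<psi>2 x / 2 - \<psi> x = (\<psi> p - \<psi> x) / 2 + (x - p) * \<psi>2 x / 2"
        by (simp add: field_simps)
      have "\<bar>(\<psi> p - \<psi> x) / 2 + (x - p) * \<psi>2 x / 2\<bar> \<le> \<bar>(\<psi> p - \<psi> x) / 2\<bar> + \<bar>(x - p) * \<psi>2 x / 2\<bar>"
        by (rule abs_triangle_ineq)
      also have "\<dots> = \<bar>\<psi> x - \<psi> p\<bar> / 2 + (x - p) * \<bar>\<psi>2 x\<bar> / 2"
        using x by (simp add: abs_mult abs_minus_commute)
      finally show ?thesis unfolding e .
    qed
    also have "\<dots> \<le> (W x - W p) / 2 + (x - p) * \<bar>\<psi>2 x\<bar> / 2" using psi_b[OF x(1)] by simp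
    finally show "\<bar>(\<psi> p + \<psi> x) / 2 + (x - p) * \<psi>2 x / 2 - \<psi> x\<bar>
          \<le> (W x - W p) / 2 + (x - p) * \<bar>\<psi>2 x\<bar> / 2" .
  qed (use \<open>p < q\<close> in simp)
  then have "\<bar>K q\<bar> \<le> (q - p) * (W q - W p) / 2" by (simp add: K_def R_def)
  moreover have "(\<psi> q + \<psi> p) / 2 - (\<phi> q - \<phi> p) / (q - p) = K q / (q - p)"
    using \<open>p < q\<close> by (simp add: K_def field_simps)
  ultimately show ?thesis using \<open>p < q\<close> by (simp add: divide_le_eq abs_divide mult.commute)
qed

lemma jump_sum_le:
  fixes W :: "real \<Rightarrow> real"
  assumes g: "in_G g" and Wm: "\<And>x y. x \<le> y \<Longrightarrow> W x \<le> W y"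
    and F: "finite F" "F \<subseteq> jumps g"
  shows "(\<Sum>a\<in>F. W (g a) - W (gminus g a)) \<le> W (gminus g 0 + 1) - W (gminus g 0)"
proof (rule telescope_le[OF F(1) Wm])
  have m: "mono g" using in_G_facts(1)[OF g] .
  show "\<forall>a\<in>F. gminus g 0 \<le> gminus g a \<and> gminus g a \<le> g a \<and> g a \<le> gminus g 0 + 1"
    using F(2) jump_range[OF g] gminus_le_g[OF m] by blast
  show "\<forall>a\<in>F. \<forall>b\<in>F. a < b \<longrightarrow> g a \<le> gminus g b"
    using jump_order[OF g] by blast
qed auto

lemma sum_bdd_summable:
  fixes f :: "'a \<Rightarrow> real"
  assumes "\<And>a. a \<in> A \<Longrightarrow> 0 \<le> f a" and "\<And>F. finite F \<Longrightarrow> F \<subseteq> A \<Longrightarrow> sum f F \<le> B"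
  shows "f summable_on A" "infsum f A \<le> B"
proof -
  show s: "f summable_on A"
    by (rule nonneg_bdd_above_summable_on) (use assms in \<open>auto intro!: bdd_aboveI2[of _ _ B]\<close>)
  show "infsum f A \<le> B" by (rule infsum_le_finite_sums[OF s]) (use assms in auto)
qed

lemma jumps_d_summable:
  assumes g: "in_G g"
  shows "(\<lambda>a. g a - gminus g a) summable_on jumps g"
    "\<And>F. finite F \<Longrightarrow> F \<subseteq> jumps g \<Longrightarrow> (\<Sum>a\<in>F. g a - gminus g a) \<le> 1"
proof -
  show b: "\<And>F. finite F \<Longrightarrow> F \<subseteq> jumps g \<Longrightarrow> (\<Sum>a\<in>F. g a - gminus g a) \<le> 1"
    using jump_sum_le[OF g, of "\<lambda>x. x"] by simp
  show "(\<lambda>a. g a - gminus g a) summable_on jumps g"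
    by (rule sum_bdd_summable(1)[OF _ b]) (use jump_pos[OF g] in \<open>auto simp: less_imp_le\<close>)
qed

lemma comp_mono_integrable:
  fixes f g :: "real \<Rightarrow> real"
  assumes c: "continuous_on UNIV f" and m: "mono g" and bd: "\<And>x. \<bar>f x\<bar> \<le> M"
  shows "(\<lambda>x. f (g x)) integrable_on {a..b}"
proof (rule measurable_bounded_by_integrable_imp_integrable_real)
  have "g \<in> borel_measurable borel" by (rule borel_measurable_mono[OF m])
  then have "(\<lambda>x. g (id x)) \<in> borel_measurable (lebesgue_on {a..b})"
    by (rule measurable_compose[OF id_borel_measurable_lebesgue_on])
  then have "g \<in> borel_measurable (lebesgue_on {a..b})" by simp
  then show "(\<lambda>x. f (g x)) \<in> borel_measurable (lebesgue_on {a..b})"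
    by (rule borel_measurable_continuous_on[OF c])
  show "(\<lambda>x. M) integrable_on {a..b}" by (rule integrable_continuous_interval) (rule continuous_on_const)
  show "\<And>x. x \<in> {a..b} \<Longrightarrow> \<bar>f (g x)\<bar> \<le> M" using bd by simp
  show "{a..b} \<in> sets lebesgue" by simp
qed

lemma psi_bound:
  fixes \<phi> \<psi> \<psi>2 W :: "real \<Rightarrow> real"
  assumes d1: "\<And>x. DERIV \<phi> x :> \<psi> x" and d2: "\<And>x. DERIV \<psi> x :> \<psi>2 x"
    and dW: "\<And>x. DERIV W x :> \<bar>\<psi>2 x\<bar>"
    and p0: "\<And>x. \<phi> (x + 1) = \<phi> x" and p1: "\<And>x. \<psi> (x + 1) = \<psi> x"
    and p2: "\<And>x. \<psi>2 (x + 1) = \<psi>2 x"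
  shows "2 * \<bar>\<psi> y\<bar> \<le> W 1 - W 0"
proof -
  obtain z where z: "0 < z" "z < 1" "\<phi> 1 - \<phi> 0 = (1 - 0) * \<psi> z"
    using MVT2[of 0 1 \<phi> \<psi>] d1 by auto
  have "\<phi> 1 = \<phi> 0" using p0[of 0] by simp
  then have pz: "\<psi> z = 0" using z by simp
  define y' where "y' = y - real_of_int \<lfloor>y - z\<rfloor>"
  have y'1: "z \<le> y'" "y' \<le> z + 1" unfolding y'_def by linarith+
  have "\<psi> y = \<psi> (y' + real_of_int \<lfloor>y - z\<rfloor>)" unfolding y'_def by simp
  also have "\<dots> = \<psi> y'" by (rule periodic_int[of \<psi>, OF p1])
  finally have yy: "\<psi> y = \<psi> y'" .
  have a: "\<bar>\<psi> y' - \<psi> z\<bar> \<le> W y' - W z"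
    using y'1(1) by (rule deriv_compare) (use d2 dW in auto)
  have b: "\<bar>\<psi> (z + 1) - \<psi> y'\<bar> \<le> W (z + 1) - W y'"
    using y'1(2) by (rule deriv_compare) (use d2 dW in auto)
  have "W (z + 1) - W z = W 1 - W 0"
    by (rule W_periodic[OF dW]) (use p2 in simp)
  then show ?thesis using a b pz p1[of z] yy by linarith
qed


lemma deriv_le_diff:
  fixes F H :: "real \<Rightarrow> real"
  assumes "a \<le> b"
    and dF: "\<And>x. a \<le> x \<Longrightarrow> x \<le> b \<Longrightarrow> DERIV F x :> F' x"
    and dH: "\<And>x. a \<le> x \<Longrightarrow> x \<le> b \<Longrightarrow> DERIV H x :> H' x"
    and le: "\<And>x. a \<le> x \<Longrightarrow> x \<le> b \<Longrightarrow> F' x \<le> H' x"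
  shows "F b - F a \<le> H b - H a"
proof -
  have "(\<lambda>x. H x - F x) a \<le> (\<lambda>x. H x - F x) b"
    using assms(1)
  proof (rule DERIV_nonneg_imp_nondecreasing)
    fix x assume x: "a \<le> x" "x \<le> b"
    show "\<exists>y. DERIV (\<lambda>x. H x - F x) x :> y \<and> 0 \<le> y"
      using DERIV_diff[OF dH[OF x] dF[OF x]] le[OF x] by (intro exI[of _ "H' x - F' x"]) auto
  qed
  then show ?thesis by simp
qed

lemma exp_upper:
  fixes u :: real
  assumes "\<bar>u\<bar> \<le> 1"
  shows "exp u \<le> 1 + u + u\<^sup>2"
proof (cases "0 \<le> u")
  case True then show ?thesis using exp_bound[of u] assms by simp
next
  case False
  have "1 + (-u) \<le> exp (-u)" by (rule exp_ge_add_one_self)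
  then have "exp u * (1 - u) \<le> exp u * exp (-u)" by (intro mult_left_mono) auto
  then have "exp u * (1 - u) \<le> 1" by (simp add: exp_minus field_simps)
  moreover have "1 \<le> (1 - u) * (1 + u + u\<^sup>2)"
  proof -
    have e: "(1 - u) * (1 + u + u\<^sup>2) = 1 - u ^ 3"
      by (simp add: power2_eq_square power3_eq_cube algebra_simps)
    have "u ^ 3 < 0" using False by (simp add: power_less_zero_eq)
    then show ?thesis unfolding e by linarith
  qed
  ultimately have "exp u * (1 - u) \<le> (1 + u + u\<^sup>2) * (1 - u)" by (simp add: mult.commute)
  then show ?thesis using False by (simp add: mult_le_cancel_right)
qed

lemma ln_lower:
  fixes v :: real
  assumes "\<bar>v\<bar> \<le> 1/2"
  shows "v - 2 * v\<^sup>2 \<le> ln (1 + v)"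
proof (cases "0 \<le> v")
  case True
  then have "v - v\<^sup>2 \<le> ln (1 + v)" using ln_one_plus_pos_lower_bound[of v] assms by simp
  moreover have "v - 2 * v\<^sup>2 \<le> v - v\<^sup>2" by simp
  ultimately show ?thesis by linarith
next
  case False
  then show ?thesis using ln_one_minus_pos_lower_bound[of "-v"] assms by simp
qed

lemma sqrt_exp_mult: "sqrt (exp a * exp b) = exp ((a + b) / 2)"
proof (rule real_sqrt_unique)
  show "(exp ((a + b) / 2))\<^sup>2 = exp a * exp b"
    by (simp add: power2_eq_square exp_add[symmetric])
qed simp

lemma jump_log_est:
  fixes \<phi> \<psi> H \<Lambda> :: "real \<Rightarrow> real" and t p q K B :: real
  assumes d\<phi>: "\<And>y. DERIV \<phi> y :> \<psi> y"
    and \<psi>L: "\<And>y z. \<bar>\<psi> y - \<psi> z\<bar> \<le> B * \<bar>y - z\<bar>"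
    and dH: "\<And>y. DERIV H y :> exp (\<Lambda> y)"
    and GL: "\<And>y z. \<bar>(\<Lambda> y - t * \<psi> y) - (\<Lambda> z - t * \<psi> z)\<bar> \<le> K * t\<^sup>2 * \<bar>y - z\<bar>"
    and pq: "p < q" "q - p \<le> 1" and tB: "\<bar>t\<bar> * B \<le> 1/2" and K: "0 \<le> K" and B: "0 \<le> B"
  shows "0 < H q - H p"
    and "\<bar>((\<Lambda> p + \<Lambda> q) / 2 - ln ((H q - H p) / (q - p)))
           - t * ((\<psi> q + \<psi> p) / 2 - (\<phi> q - \<phi> p) / (q - p))\<bar>
         \<le> (2 * K + 2 * B\<^sup>2) * t\<^sup>2 * (q - p)"
proof -
  define d where "d = q - p"
  have d: "0 < d" "d \<le> 1" using pq by (auto simp: d_def)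
  define G where "G y = \<Lambda> y - t * \<psi> y" for y
  define \<delta> where "\<delta> = K * t\<^sup>2 * d"
  define \<omega> where "\<omega> = \<bar>t\<bar> * B * d"
  have \<delta>0: "0 \<le> \<delta>" using K d by (simp add: \<delta>_def)
  have \<omega>0: "0 \<le> \<omega>" using B d by (simp add: \<omega>_def)
  have \<omega>1: "\<omega> \<le> 1/2"
  proof -
    have "\<omega> \<le> \<bar>t\<bar> * B * 1" unfolding \<omega>_def using d B by (intro mult_left_mono) auto
    then show ?thesis using tB by simp
  qed
  have Gy: "\<bar>G y - G p\<bar> \<le> \<delta>" if "p \<le> y" "y \<le> q" for y
  proof -
    have "\<bar>G y - G p\<bar> \<le> K * t\<^sup>2 * \<bar>y - p\<bar>" using GL[of y p] by (simp add: G_def)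
    also have "\<dots> \<le> K * t\<^sup>2 * d" using that K by (intro mult_left_mono) (auto simp: d_def)
    finally show ?thesis by (simp add: \<delta>_def)
  qed
  define u where "u y = t * \<psi> y - t * \<psi> p" for y
  have uy: "\<bar>u y\<bar> \<le> \<omega>" if "p \<le> y" "y \<le> q" for y
  proof -
    have "\<bar>u y\<bar> = \<bar>t\<bar> * \<bar>\<psi> y - \<psi> p\<bar>" by (simp add: u_def abs_mult[symmetric] right_diff_distrib)
    also have "\<dots> \<le> \<bar>t\<bar> * (B * \<bar>y - p\<bar>)" by (intro mult_left_mono \<psi>L) auto
    also have "\<dots> \<le> \<bar>t\<bar> * (B * d)" using that B by (intro mult_left_mono) (auto simp: d_def)
    finally show ?thesis by (simp add: \<omega>_def mult.assoc)
  qed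
  define C where "C = exp (\<Lambda> p)"
  have C0: "0 < C" by (simp add: C_def)
  have Lsplit: "\<Lambda> y = \<Lambda> p + (G y - G p) + u y" for y
    by (simp add: G_def u_def)
  define v where "v = t * (\<phi> q - \<phi> p) / d - t * \<psi> p"
  obtain \<xi> where \<xi>: "p < \<xi>" "\<xi> < q" "\<phi> q - \<phi> p = (q - p) * \<psi> \<xi>"
    using MVT2[OF pq(1), of \<phi> \<psi>] d\<phi> by blast
  have v_eq: "v = u \<xi>" using \<xi> d by (simp add: v_def u_def d_def)
  have v\<omega>: "\<bar>v\<bar> \<le> \<omega>" using uy[of \<xi>] \<xi> v_eq by simp
  define lowF where "lowF y = C * exp (- \<delta>) * ((y - p) * (1 - t * \<psi> p) + t * \<phi> y)" for y
  have dlow: "DERIV lowF y :> C * exp (- \<delta>) * (1 + u y)" for y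
    unfolding lowF_def u_def by (auto intro!: derivative_eq_intros d\<phi> simp: algebra_simps)
  have low: "lowF q - lowF p \<le> H q - H p"
  proof (rule deriv_le_diff[OF _ dlow dH])
    fix y assume y: "p \<le> y" "y \<le> q"
    have "exp (- \<delta>) \<le> exp (G y - G p)" using Gy[OF y] by simp
    moreover have "1 + u y \<le> exp (u y)" by (rule exp_ge_add_one_self)
    moreover have "0 \<le> 1 + u y" using uy[OF y] \<omega>1 by linarith
    ultimately have "exp (- \<delta>) * (1 + u y) \<le> exp (G y - G p) * exp (u y)"
      by (intro mult_mono) auto
    then have "C * (exp (- \<delta>) * (1 + u y)) \<le> C * (exp (G y - G p) * exp (u y))"
      using C0 by (intro mult_left_mono) auto
    then show "C * exp (- \<delta>) * (1 + u y) \<le> exp (\<Lambda> y)"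
      by (subst Lsplit) (simp add: C_def exp_add mult.assoc)
  qed (use pq in simp)
  define upF where "upF y = C * exp \<delta> * ((y - p) * (1 - t * \<psi> p + \<omega>\<^sup>2) + t * \<phi> y)" for y
  have dup: "DERIV upF y :> C * exp \<delta> * (1 + u y + \<omega>\<^sup>2)" for y
    unfolding upF_def u_def by (auto intro!: derivative_eq_intros d\<phi> simp: algebra_simps)
  have up: "H q - H p \<le> upF q - upF p"
  proof (rule deriv_le_diff[OF _ dH dup])
    fix y assume y: "p \<le> y" "y \<le> q"
    have "exp (G y - G p) \<le> exp \<delta>" using Gy[OF y] by simp
    moreover have "exp (u y) \<le> 1 + u y + (u y)\<^sup>2" using uy[OF y] \<omega>1 by (intro exp_upper) linarith
    moreover have "(u y)\<^sup>2 \<le> \<omega>\<^sup>2" using power_mono[OF uy[OF y] abs_ge_zero, of 2] by simp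
    ultimately have "exp (G y - G p) * exp (u y) \<le> exp \<delta> * (1 + u y + \<omega>\<^sup>2)"
      by (intro mult_mono) auto
    then have "C * (exp (G y - G p) * exp (u y)) \<le> C * (exp \<delta> * (1 + u y + \<omega>\<^sup>2))"
      using C0 by (intro mult_left_mono) auto
    then show "exp (\<Lambda> y) \<le> C * exp \<delta> * (1 + u y + \<omega>\<^sup>2)"
      by (subst Lsplit) (simp add: C_def exp_add mult.assoc)
  qed (use pq in simp)
  have lowq: "lowF q - lowF p = C * exp (- \<delta>) * d * (1 + v)"
    using d by (simp add: lowF_def v_def d_def field_simps)
  have upq: "upF q - upF p = C * exp \<delta> * d * (1 + v + \<omega>\<^sup>2)"
    using d by (simp add: upF_def v_def d_def field_simps)
  have v1: "0 < 1 + v" using v\<omega> \<omega>1 by linarith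
  have "0 < C * exp (- \<delta>) * d * (1 + v)" using C0 d v1 by (intro mult_pos_pos) auto
  then show Hpos: "0 < H q - H p" using low lowq by linarith
  define A where "A = (H q - H p) / d"
  have A0: "0 < A" using Hpos d by (simp add: A_def)
  define Z where "Z = ln A - \<Lambda> p"
  have eZ: "exp Z = A / C" using A0 by (simp add: Z_def C_def exp_diff)
  have Zlow: "exp (- \<delta>) * (1 + v) \<le> exp Z"
    using low lowq C0 d by (simp add: eZ A_def field_simps)
  have Zup: "exp Z \<le> exp \<delta> * (1 + v + \<omega>\<^sup>2)"
    using up upq C0 d by (simp add: eZ A_def field_simps)
  have "ln (exp (- \<delta>) * (1 + v)) \<le> ln (exp Z)" using Zlow v1 by (subst ln_le_cancel_iff) auto
  then have "ln (exp (- \<delta>) * (1 + v)) \<le> Z" by simp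
  then have Z1: "- \<delta> + ln (1 + v) \<le> Z" using v1 by (simp add: ln_mult)
  have v2: "0 < 1 + v + \<omega>\<^sup>2" using v1 zero_le_power2[of \<omega>] by linarith
  have "ln (exp Z) \<le> ln (exp \<delta> * (1 + v + \<omega>\<^sup>2))" using Zup v2
    by (subst ln_le_cancel_iff) auto
  then have "Z \<le> ln (exp \<delta> * (1 + v + \<omega>\<^sup>2))" by simp
  then have Z2: "Z \<le> \<delta> + ln (1 + v + \<omega>\<^sup>2)" using v2 by (simp add: ln_mult)
  have "ln (1 + (v + \<omega>\<^sup>2)) \<le> v + \<omega>\<^sup>2" using v2 by (intro ln_add_one_self_le_self2) auto
  then have Z3: "Z \<le> \<delta> + v + \<omega>\<^sup>2" using Z2 by (simp add: add.assoc)
  have "v - 2 * v\<^sup>2 \<le> ln (1 + v)" using v\<omega> \<omega>1 by (intro ln_lower) linarith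
  moreover have "v\<^sup>2 \<le> \<omega>\<^sup>2" using power_mono[OF v\<omega> abs_ge_zero, of 2] by simp
  ultimately have Z4: "- \<delta> + v - 2 * \<omega>\<^sup>2 \<le> Z" using Z1 by linarith
  have Zv: "\<bar>Z - v\<bar> \<le> \<delta> + 2 * \<omega>\<^sup>2"
  proof (rule abs_leI)
    show "Z - v \<le> \<delta> + 2 * \<omega>\<^sup>2" using Z3 zero_le_power2[of \<omega>] by linarith
    show "- (Z - v) \<le> \<delta> + 2 * \<omega>\<^sup>2" using Z4 by linarith
  qed
  have X: "((\<Lambda> p + \<Lambda> q) / 2 - ln ((H q - H p) / (q - p)))
           - t * ((\<psi> q + \<psi> p) / 2 - (\<phi> q - \<phi> p) / (q - p)) = (G q - G p) / 2 - (Z - v)"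
    using d by (simp add: Z_def A_def d_def[symmetric] v_def G_def field_simps)
  have "\<bar>(G q - G p) / 2 - (Z - v)\<bar> \<le> \<delta> / 2 + (\<delta> + 2 * \<omega>\<^sup>2)"
  proof (rule abs_leI)
    have a: "\<bar>G q - G p\<bar> \<le> \<delta>" using Gy[of q] pq by simp
    show "(G q - G p) / 2 - (Z - v) \<le> \<delta> / 2 + (\<delta> + 2 * \<omega>\<^sup>2)" using a Zv unfolding abs_le_iff by (elim conjE) (simp add: field_simps)
    show "- ((G q - G p) / 2 - (Z - v)) \<le> \<delta> / 2 + (\<delta> + 2 * \<omega>\<^sup>2)" using a Zv unfolding abs_le_iff by (elim conjE) (simp add: field_simps)
  qed
  also have "\<dots> \<le> (2 * K + 2 * B\<^sup>2) * t\<^sup>2 * d"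
  proof -
    have "\<omega>\<^sup>2 = t\<^sup>2 * B\<^sup>2 * d * d" by (simp add: \<omega>_def power2_eq_square)
    also have "\<dots> \<le> t\<^sup>2 * B\<^sup>2 * d * 1" using d by (intro mult_left_mono) auto
    finally have "\<omega>\<^sup>2 \<le> t\<^sup>2 * B\<^sup>2 * d" by simp
    moreover have "0 \<le> K * t\<^sup>2 * d" using K d by simp
    ultimately show ?thesis by (simp add: \<delta>_def algebra_simps)
  qed
  finally show "\<bar>((\<Lambda> p + \<Lambda> q) / 2 - ln ((H q - H p) / (q - p)))
           - t * ((\<psi> q + \<psi> p) / 2 - (\<phi> q - \<phi> p) / (q - p))\<bar>
         \<le> (2 * K + 2 * B\<^sup>2) * t\<^sup>2 * (q - p)" unfolding X d_def .
qed


lemma quad_deriv: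
  fixes \<Phi> :: "real \<Rightarrow> real"
  assumes e: "0 < e" and bd: "\<And>t. \<bar>t\<bar> < e \<Longrightarrow> \<bar>\<Phi> t - t * V\<bar> \<le> C * t\<^sup>2"
  shows "\<Phi> 0 = 0" "DERIV \<Phi> 0 :> V"
proof -
  show \<Phi>0: "\<Phi> 0 = 0" using bd[of 0] e by simp
  have "((\<lambda>y. (\<Phi> y - \<Phi> 0) / (y - 0) - V) \<longlongrightarrow> 0) (at 0)"
  proof (rule Lim_null_comparison)
    show "\<forall>\<^sub>F y in at 0. norm ((\<Phi> y - \<Phi> 0) / (y - 0) - V) \<le> \<bar>C\<bar> * \<bar>y\<bar>"
      unfolding eventually_at
    proof (intro exI[of _ e] conjI allI impI ballI)
      fix y :: real assume y: "y \<noteq> 0 \<and> dist y 0 < e"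
      have "(\<Phi> y - \<Phi> 0) / (y - 0) - V = (\<Phi> y - y * V) / y" using y \<Phi>0 by (simp add: field_simps)
      then have "norm ((\<Phi> y - \<Phi> 0) / (y - 0) - V) = \<bar>\<Phi> y - y * V\<bar> / \<bar>y\<bar>" by (simp add: abs_divide)
      also have "\<dots> \<le> (C * y\<^sup>2) / \<bar>y\<bar>" using y bd[of y] by (intro divide_right_mono) auto
      also have "\<dots> = C * \<bar>y\<bar>"
      proof -
        show ?thesis using y by (cases "0 < y") (auto simp: power2_eq_square field_simps)
      qed
      also have "\<dots> \<le> \<bar>C\<bar> * \<bar>y\<bar>" by (intro mult_right_mono) auto
      finally show "norm ((\<Phi> y - \<Phi> 0) / (y - 0) - V) \<le> \<bar>C\<bar> * \<bar>y\<bar>" .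
    qed (use e in auto)
    have "((\<lambda>y. \<bar>C\<bar> * \<bar>y\<bar>) \<longlongrightarrow> \<bar>C\<bar> * \<bar>0\<bar>) (at (0::real))" by (intro tendsto_intros)
    then show "((\<lambda>y. \<bar>C\<bar> * \<bar>y\<bar>) \<longlongrightarrow> 0) (at 0)" by simp
  qed
  then show "DERIV \<Phi> 0 :> V" unfolding has_field_derivative_iff by (simp add: LIM_zero_iff)
qed

lemma integral01_const: "integral {0..1::real} (\<lambda>s. c) = (c::real)"
  using integral_unique[OF has_integral_const_real[of c 0 1]] by simp

lemma lip_cont:
  fixes f :: "real \<Rightarrow> real"
  assumes "\<And>y z. \<bar>f y - f z\<bar> \<le> M * \<bar>y - z\<bar>" "0 \<le> M"
  shows "continuous_on UNIV f"
  by (rule lipschitz_on_continuous_on[of M]) (rule lipschitz_onI, use assms in \<open>auto simp: dist_real_def\<close>)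

lemma abstract_deriv:
  fixes \<phi> g :: "real \<Rightarrow> real" and h L :: "real \<Rightarrow> real \<Rightarrow> real"
    and \<beta> \<epsilon> K B B0 :: real
  assumes g: "in_G g"
    and d\<phi>: "\<And>y. DERIV \<phi> y :> deriv \<phi> y"
    and \<psi>L: "\<And>y z. \<bar>deriv \<phi> y - deriv \<phi> z\<bar> \<le> B * \<bar>y - z\<bar>"
    and \<psi>b: "\<And>y. \<bar>deriv \<phi> y\<bar> \<le> B0"
    and sum_c: "(\<lambda>a. \<bar>V0_term \<phi> g a\<bar>) summable_on jumps g"
    and \<epsilon>: "0 < \<epsilon>" and K: "0 \<le> K" and B: "0 \<le> B"
    and dh: "\<And>t y. \<bar>t\<bar> < \<epsilon> \<Longrightarrow> DERIV (h t) y :> exp (L t y)"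
    and G1: "\<And>t y. \<bar>t\<bar> < \<epsilon> \<Longrightarrow> \<bar>L t y - t * deriv \<phi> y\<bar> \<le> K * t\<^sup>2"
    and G2: "\<And>t y z. \<bar>t\<bar> < \<epsilon> \<Longrightarrow>
               \<bar>(L t y - t * deriv \<phi> y) - (L t z - t * deriv \<phi> z)\<bar> \<le> K * t\<^sup>2 * \<bar>y - z\<bar>"
  shows "DERIV (\<lambda>t. Ybeta \<beta> (h t) g) 0 :> Vbeta \<beta> \<phi> g"
proof -
  define \<psi> where "\<psi> = deriv \<phi>"
  define \<epsilon>1 where "\<epsilon>1 = min \<epsilon> (1 / (2 * (B + 1)))"
  have \<epsilon>1: "0 < \<epsilon>1" using \<epsilon> B by (simp add: \<epsilon>1_def)
  have tB: "\<bar>t\<bar> * B \<le> 1/2" if "\<bar>t\<bar> < \<epsilon>1" for t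
  proof -
    have "\<bar>t\<bar> \<le> 1 / (2 * (B + 1))" using that by (simp add: \<epsilon>1_def)
    then have "\<bar>t\<bar> * B \<le> 1 / (2 * (B + 1)) * B" using B by (intro mult_right_mono) auto
    also have "\<dots> \<le> 1/2" using B by (simp add: field_simps)
    finally show ?thesis .
  qed
  define C2 where "C2 = 2 * K + 2 * B\<^sup>2"
  have C2: "0 \<le> C2" using K by (simp add: C2_def)
  define c where "c a = V0_term \<phi> g a" for a
  define dd where "dd a = g a - gminus g a" for a
  define T where "T t = (\<lambda>a. sqrt (deriv (h t) (gminus g a) * deriv (h t) (g a)) / delta_quot (h t) g a)" for t
  define lT where "lT t a = ln (T t a)" for t a
  have c_sum: "c summable_on jumps g"
    using summable_on_iff_abs_summable_on_real[THEN iffD2, of "V0_term \<phi> g"] sum_c unfolding c_def by simp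
  have dd_sum: "dd summable_on jumps g" unfolding dd_def by (rule jumps_d_summable(1)[OF g])
  have dd_le: "infsum dd (jumps g) \<le> 1"
    by (rule infsum_le_finite_sums[OF dd_sum]) (use jumps_d_summable(2)[OF g] in \<open>auto simp: dd_def\<close>)
  have dd0: "a \<in> jumps g \<Longrightarrow> 0 < dd a" for a using jump_pos[OF g] by (simp add: dd_def)
  have per: "0 < T t a \<and> \<bar>lT t a - t * c a\<bar> \<le> C2 * t\<^sup>2 * dd a"
    if t: "\<bar>t\<bar> < \<epsilon>1" and a: "a \<in> jumps g" for t a
  proof -
    have te: "\<bar>t\<bar> < \<epsilon>" using t by (simp add: \<epsilon>1_def)
    define p where "p = gminus g a"
    define q where "q = g a"
    have pq: "p < q" "q - p \<le> 1" using jump_pos[OF g a] jump_le1[OF g, of a] by (auto simp: p_def q_def)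
    note est = jump_log_est[OF d\<phi> \<psi>L dh[OF te] G2[OF te] pq tB[OF t] K B]
    have dv: "deriv (h t) y = exp (L t y)" for y by (rule DERIV_imp_deriv[OF dh[OF te]])
    have Teq: "T t a = exp ((L t p + L t q) / 2) / ((h t q - h t p) / (q - p))"
      by (simp add: T_def dv sqrt_exp_mult delta_quot_def p_def q_def)
    have Apos: "0 < (h t q - h t p) / (q - p)" using est(1) pq by simp
    have Tpos: "0 < T t a" unfolding Teq by (rule divide_pos_pos[OF exp_gt_zero Apos])
    have "lT t a = (L t p + L t q) / 2 - ln ((h t q - h t p) / (q - p))"
    proof -
      have e1: "exp ((L t p + L t q) / 2) / ((h t q - h t p) / (q - p))
          = exp ((L t p + L t q) / 2 - ln ((h t q - h t p) / (q - p)))"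
        by (subst exp_diff) (subst exp_ln[OF Apos], rule refl)
      show ?thesis unfolding lT_def Teq e1 by (rule ln_exp)
    qed
    then have "\<bar>lT t a - t * c a\<bar> \<le> (2 * K + 2 * B\<^sup>2) * t\<^sup>2 * (q - p)"
      using est(2) by (simp add: c_def V0_term_def p_def q_def)
    then show ?thesis using Tpos by (simp add: C2_def dd_def p_def q_def)
  qed
  define e where "e t a = lT t a - t * c a" for t a
  have e_sum: "e t summable_on jumps g" and e_bd: "\<bar>infsum (e t) (jumps g)\<bar> \<le> C2 * t\<^sup>2"
    if t: "\<bar>t\<bar> < \<epsilon>1" for t
  proof -
    have b: "(\<lambda>a. C2 * t\<^sup>2 * dd a) summable_on jumps g"
      using dd_sum by (rule summable_on_cmult_right)
    have b': "(\<lambda>a. norm (C2 * t\<^sup>2 * dd a)) summable_on jumps g"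
      using summable_on_iff_abs_summable_on_real[THEN iffD1, OF b] .
    have ea: "(\<lambda>a. norm (e t a)) summable_on jumps g"
    proof (rule summable_on_comparison_test[OF b])
      fix a assume a: "a \<in> jumps g"
      show "norm (e t a) \<le> C2 * t\<^sup>2 * dd a" using per[OF t a] by (simp add: e_def)
      show "0 \<le> norm (e t a)" by simp
    qed
    then show es: "e t summable_on jumps g" by (rule summable_on_iff_abs_summable_on_real[THEN iffD2])
    have "\<bar>infsum (e t) (jumps g)\<bar> \<le> infsum (\<lambda>a. norm (e t a)) (jumps g)"
      using norm_infsum_bound[OF ea] by simp
    also have "\<dots> \<le> infsum (\<lambda>a. C2 * t\<^sup>2 * dd a) (jumps g)"
    proof (rule infsum_mono)
      show "(\<lambda>a. norm (e t a)) summable_on jumps g" using ea .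
      show "(\<lambda>a. C2 * t\<^sup>2 * dd a) summable_on jumps g" using b .
      show "norm (e t a) \<le> C2 * t\<^sup>2 * dd a" if "a \<in> jumps g" for a
        using per[OF t that] by (simp add: e_def)
    qed
    also have "\<dots> = C2 * t\<^sup>2 * infsum dd (jumps g)" by (simp add: infsum_cmult_right')
    also have "\<dots> \<le> C2 * t\<^sup>2 * 1" using dd_le C2 by (intro mult_left_mono) auto
    finally show "\<bar>infsum (e t) (jumps g)\<bar> \<le> C2 * t\<^sup>2" by simp
  qed
  define S where "S t = infsum (lT t) (jumps g)" for t
  have S_eq: "S t = t * V0 \<phi> g + infsum (e t) (jumps g)" if t: "\<bar>t\<bar> < \<epsilon>1" for t
  proof -
    have "lT t = (\<lambda>a. t * c a + e t a)" by (simp add: e_def fun_eq_iff)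
    then have "S t = infsum (\<lambda>a. t * c a + e t a) (jumps g)" by (simp add: S_def)
    also have "\<dots> = infsum (\<lambda>a. t * c a) (jumps g) + infsum (e t) (jumps g)"
      by (rule infsum_add) (use c_sum e_sum[OF t] in \<open>auto intro: summable_on_cmult_right\<close>)
    also have "infsum (\<lambda>a. t * c a) (jumps g) = t * V0 \<phi> g"
      by (simp add: infsum_cmult_right' V0_def c_def)
    finally show ?thesis .
  qed
  have Y0_eq: "Y0 (h t) g = exp (S t)" if t: "\<bar>t\<bar> < \<epsilon>1" for t
  proof -
    have ls: "lT t summable_on jumps g"
    proof -
      have "(\<lambda>a. t * c a + e t a) summable_on jumps g"
        by (rule summable_on_add) (use c_sum e_sum[OF t] in \<open>auto intro: summable_on_cmult_right\<close>)
      moreover have "lT t = (\<lambda>a. t * c a + e t a)" by (simp add: e_def fun_eq_iff)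
      ultimately show ?thesis by simp
    qed
    then have "(lT t has_sum S t) (jumps g)" unfolding S_def by (rule has_sum_infsum)
    then have "(sum (lT t) \<longlongrightarrow> S t) (finite_subsets_at_top (jumps g))" by (simp add: has_sum_def)
    then have lim: "((\<lambda>F. exp (sum (lT t) F)) \<longlongrightarrow> exp (S t)) (finite_subsets_at_top (jumps g))"
      by (rule tendsto_exp)
    have ev: "\<forall>\<^sub>F F in finite_subsets_at_top (jumps g). exp (sum (lT t) F) = prod (T t) F"
    proof (rule eventually_finite_subsets_at_top_weakI)
      fix F assume F: "finite F" "F \<subseteq> jumps g"
      have "exp (sum (lT t) F) = prod (\<lambda>a. exp (lT t a)) F" by (rule exp_sum[OF F(1)])
      also have "\<dots> = prod (T t) F"
        by (rule prod.cong) (use F per[OF t] in \<open>auto simp: lT_def\<close>)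
      finally show "exp (sum (lT t) F) = prod (T t) F" .
    qed
    have "((\<lambda>F. prod (T t) F) \<longlongrightarrow> exp (S t)) (finite_subsets_at_top (jumps g))"
      using tendsto_cong[OF ev] lim by simp
    then have "Lim (finite_subsets_at_top (jumps g)) (\<lambda>F. prod (T t) F) = exp (S t)"
      by (rule tendsto_Lim[OF finite_subsets_at_top_neq_bot])
    then show ?thesis by (simp add: Y0_def infprod_on_def T_def)
  qed
  have \<psi>cont: "continuous_on UNIV \<psi>" unfolding \<psi>_def by (rule lip_cont[OF \<psi>L B])
  have \<psi>int: "(\<lambda>s. \<psi> (g s)) integrable_on {0..1}"
    by (rule comp_mono_integrable[OF \<psi>cont in_G_facts(1)[OF g]]) (use \<psi>b in \<open>simp add: \<psi>_def\<close>)
  define I\<psi> where "I\<psi> = integral {0..1} (\<lambda>s. \<psi> (g s))"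
  define X where "X t = integral {0..1} (\<lambda>s. L t (g s))" for t
  have X_bd: "\<bar>X t - t * I\<psi>\<bar> \<le> K * t\<^sup>2" if t: "\<bar>t\<bar> < \<epsilon>1" for t
  proof -
    have te: "\<bar>t\<bar> < \<epsilon>" using t by (simp add: \<epsilon>1_def)
    have Lc: "continuous_on UNIV (L t)"
    proof (rule lip_cont)
      fix y z
      have "\<bar>L t y - L t z\<bar> \<le> \<bar>(L t y - t * \<psi> y) - (L t z - t * \<psi> z)\<bar> + \<bar>t\<bar> * \<bar>\<psi> y - \<psi> z\<bar>"
        by (simp add: abs_mult[symmetric] right_diff_distrib)
      also have "\<dots> \<le> K * t\<^sup>2 * \<bar>y - z\<bar> + \<bar>t\<bar> * (B * \<bar>y - z\<bar>)"
        using G2[OF te, of y z] \<psi>L[of y z] unfolding \<psi>_def by (intro add_mono mult_left_mono) auto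
      finally show "\<bar>L t y - L t z\<bar> \<le> (K * t\<^sup>2 + \<bar>t\<bar> * B) * \<bar>y - z\<bar>" by (simp add: algebra_simps)
    qed (use K B in simp)
    have Lb: "\<bar>L t y\<bar> \<le> K * t\<^sup>2 + \<bar>t\<bar> * B0" for y
    proof -
      have "\<bar>L t y\<bar> \<le> \<bar>L t y - t * \<psi> y\<bar> + \<bar>t\<bar> * \<bar>\<psi> y\<bar>" by (simp add: abs_mult[symmetric])
      also have "\<dots> \<le> K * t\<^sup>2 + \<bar>t\<bar> * B0"
        using G1[OF te, of y] \<psi>b[of y] unfolding \<psi>_def by (intro add_mono mult_left_mono) auto
      finally show ?thesis .
    qed
    have Lint: "(\<lambda>s. L t (g s)) integrable_on {0..1}"
      by (rule comp_mono_integrable[OF Lc in_G_facts(1)[OF g] Lb])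
    have tint: "(\<lambda>s. t * \<psi> (g s)) integrable_on {0..1}"
      using integrable_cmul[OF \<psi>int, of t] by simp
    have "X t - t * I\<psi> = integral {0..1} (\<lambda>s. L t (g s) - t * \<psi> (g s))"
      by (simp add: X_def I\<psi>_def Henstock_Kurzweil_Integration.integral_diff[OF Lint tint])
    also have "\<bar>\<dots>\<bar> \<le> K * t\<^sup>2"
    proof -
      have i1: "(\<lambda>s. L t (g s) - t * \<psi> (g s)) integrable_on {0..1}" using Lint tint by (rule integrable_diff)
      have i2: "(\<lambda>s::real. K * t\<^sup>2) integrable_on {0..1}"
        by (rule integrable_continuous_interval) (rule continuous_on_const)
      have "norm (integral {0..1} (\<lambda>s. L t (g s) - t * \<psi> (g s))) \<le> integral {0..1} (\<lambda>s::real. K * t\<^sup>2)"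
        by (rule Henstock_Kurzweil_Integration.integral_norm_bound_integral[OF i1 i2])
          (use G1[OF te] in \<open>simp add: \<psi>_def\<close>)
      then show ?thesis by (simp only: integral01_const real_norm_def)
    qed
    finally show ?thesis .
  qed
  have X_eq: "Xbeta \<beta> (h t) g = exp (\<beta> * X t)" if t: "\<bar>t\<bar> < \<epsilon>1" for t
  proof -
    have te: "\<bar>t\<bar> < \<epsilon>" using t by (simp add: \<epsilon>1_def)
    have dv: "deriv (h t) y = exp (L t y)" for y by (rule DERIV_imp_deriv[OF dh[OF te]])
    show ?thesis by (simp add: Xbeta_def X_def dv)
  qed
  define \<Phi> where "\<Phi> t = \<beta> * X t + S t" for t
  have Vb: "Vbeta \<beta> \<phi> g = V0 \<phi> g + \<beta> * I\<psi>" by (simp add: Vbeta_def I\<psi>_def \<psi>_def)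
  have \<Phi>bd: "\<bar>\<Phi> t - t * Vbeta \<beta> \<phi> g\<bar> \<le> (\<bar>\<beta>\<bar> * K + C2) * t\<^sup>2" if t: "\<bar>t\<bar> < \<epsilon>1" for t
  proof -
    have "\<Phi> t - t * Vbeta \<beta> \<phi> g = \<beta> * (X t - t * I\<psi>) + infsum (e t) (jumps g)"
      by (simp add: \<Phi>_def S_eq[OF t] Vb algebra_simps)
    also have "\<bar>\<dots>\<bar> \<le> \<bar>\<beta> * (X t - t * I\<psi>)\<bar> + \<bar>infsum (e t) (jumps g)\<bar>"
      by (rule abs_triangle_ineq)
    also have "\<dots> = \<bar>\<beta>\<bar> * \<bar>X t - t * I\<psi>\<bar> + \<bar>infsum (e t) (jumps g)\<bar>" by (simp add: abs_mult)
    also have "\<dots> \<le> \<bar>\<beta>\<bar> * (K * t\<^sup>2) + C2 * t\<^sup>2"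
      by (intro add_mono mult_left_mono X_bd[OF t] e_bd[OF t]) auto
    finally show ?thesis by (simp add: algebra_simps)
  qed
  have D\<Phi>: "DERIV \<Phi> 0 :> Vbeta \<beta> \<phi> g" and \<Phi>0: "\<Phi> 0 = 0"
    using quad_deriv[OF \<epsilon>1 \<Phi>bd] by auto
  have "DERIV (\<lambda>t. exp (\<Phi> t)) 0 :> exp (\<Phi> 0) * Vbeta \<beta> \<phi> g"
    by (rule DERIV_chain2[OF DERIV_exp D\<Phi>])
  then have DE: "DERIV (\<lambda>t. exp (\<Phi> t)) 0 :> Vbeta \<beta> \<phi> g" using \<Phi>0 by simp
  have ev: "\<forall>\<^sub>F t in nhds 0. Ybeta \<beta> (h t) g = exp (\<Phi> t)"
    unfolding eventually_nhds_metric
  proof (intro exI[of _ \<epsilon>1] conjI allI impI)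
    fix t :: real assume "dist t 0 < \<epsilon>1"
    then have t: "\<bar>t\<bar> < \<epsilon>1" by simp
    show "Ybeta \<beta> (h t) g = exp (\<Phi> t)"
      by (simp add: Ybeta_def X_eq[OF t] Y0_eq[OF t] \<Phi>_def exp_add)
  qed (use \<epsilon>1 in simp)
  show ?thesis using DE DERIV_cong_ev[OF refl ev refl] by simp
qed


lemma lip_from_deriv:
  fixes \<phi> \<psi> :: "real \<Rightarrow> real"
  assumes "\<And>y. DERIV \<phi> y :> \<psi> y" "\<And>y. \<bar>\<psi> y\<bar> \<le> L"
  shows "\<bar>\<phi> a - \<phi> b\<bar> \<le> L * \<bar>a - b\<bar>"
  using mvt_bound[OF assms] .

lemma ode_unique:
  fixes \<phi> u v :: "real \<Rightarrow> real"
  assumes Lip: "\<And>a b. \<bar>\<phi> a - \<phi> b\<bar> \<le> L * \<bar>a - b\<bar>" and L: "0 \<le> L"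
    and du: "\<And>s. DERIV u s :> \<phi> (u s)" and dv: "\<And>s. DERIV v s :> \<phi> (v s)"
    and eq: "u s0 = v s0"
  shows "u s = v s"
proof -
  define f where "f s = (u s - v s)\<^sup>2" for s
  define f' where "f' s = 2 * (u s - v s) * (\<phi> (u s) - \<phi> (v s))" for s
  have df: "DERIV f s :> f' s" for s
    unfolding f_def f'_def by (auto intro!: derivative_eq_intros du dv simp: power2_eq_square algebra_simps)
  have f0: "0 \<le> f s" for s by (simp add: f_def)
  have fb: "\<bar>f' s\<bar> \<le> 2 * L * f s" for s
  proof -
    have "\<bar>f' s\<bar> = 2 * \<bar>u s - v s\<bar> * \<bar>\<phi> (u s) - \<phi> (v s)\<bar>" unfolding f'_def abs_mult by simp
    also have "\<dots> \<le> 2 * \<bar>u s - v s\<bar> * (L * \<bar>u s - v s\<bar>)" by (intro mult_left_mono Lip) auto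
    also have "\<dots> = 2 * L * f s" by (simp add: f_def power2_eq_square abs_mult_self algebra_simps)
    finally show ?thesis .
  qed
  have "f s \<le> 0"
  proof (cases "s0 \<le> s")
    case True
    define k where "k r = f r * exp (- 2 * L * (r - s0))" for r
    have "k s0 \<ge> k s"
      using True
    proof (rule DERIV_nonpos_imp_nonincreasing)
      fix r
      have "DERIV k r :> f' r * exp (- 2 * L * (r - s0)) - 2 * L * f r * exp (- 2 * L * (r - s0))"
        unfolding k_def by (auto intro!: derivative_eq_intros df simp: algebra_simps)
      moreover have "f' r * exp (- 2 * L * (r - s0)) - 2 * L * f r * exp (- 2 * L * (r - s0)) \<le> 0"
      proof -
        have "f' r \<le> 2 * L * f r" using fb[of r] by simp
        then have "f' r * exp (- 2 * L * (r - s0)) \<le> 2 * L * f r * exp (- 2 * L * (r - s0))"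
          by (intro mult_right_mono) auto
        then show ?thesis by simp
      qed
      ultimately show "\<exists>y. DERIV k r :> y \<and> y \<le> 0" by blast
    qed
    moreover have "k s0 = 0" using eq by (simp add: k_def f_def)
    ultimately have "f s * exp (- 2 * L * (s - s0)) \<le> 0" by (simp add: k_def)
    then show ?thesis by (simp add: mult_le_0_iff)
  next
    case False
    then have le: "s \<le> s0" by simp
    define k where "k r = f r * exp (2 * L * (r - s0))" for r
    have "k s \<le> k s0"
      using le
    proof (rule DERIV_nonneg_imp_nondecreasing)
      fix r
      have "DERIV k r :> f' r * exp (2 * L * (r - s0)) + 2 * L * f r * exp (2 * L * (r - s0))"
        unfolding k_def by (auto intro!: derivative_eq_intros df simp: algebra_simps)
      moreover have "0 \<le> f' r * exp (2 * L * (r - s0)) + 2 * L * f r * exp (2 * L * (r - s0))"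
      proof -
        have "- (2 * L * f r) \<le> f' r" using fb[of r] by simp
        then have "- (2 * L * f r) * exp (2 * L * (r - s0)) \<le> f' r * exp (2 * L * (r - s0))"
          by (intro mult_right_mono) auto
        then show ?thesis by simp
      qed
      ultimately show "\<exists>y. DERIV k r :> y \<and> 0 \<le> y" by blast
    qed
    moreover have "k s0 = 0" using eq by (simp add: k_def f_def)
    ultimately have "f s * exp (2 * L * (s - s0)) \<le> 0" by (simp add: k_def)
    then show ?thesis by (simp add: mult_le_0_iff)
  qed
  then have "f s = 0" using f0[of s] by simp
  then show ?thesis by (simp add: f_def)
qed

lemma ode_exists:
  fixes \<phi> :: "real \<Rightarrow> real"
  assumes Lip: "\<And>a b. \<bar>\<phi> a - \<phi> b\<bar> \<le> L * \<bar>a - b\<bar>" and L: "0 < L"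
    and M: "\<And>y. \<bar>\<phi> y\<bar> \<le> M"
  shows "\<exists>u. u 0 = x \<and> (\<forall>s. DERIV u s :> \<phi> (u s))"
proof -
  have \<phi>c: "continuous_on UNIV \<phi>"
    by (rule lipschitz_on_continuous_on[of L]) (rule lipschitz_onI, use Lip L in \<open>auto simp: dist_real_def\<close>)
  define E where "E r = exp (2 * L * \<bar>r\<bar>)" for r :: real
  have E1: "1 \<le> E r" for r using L by (simp add: E_def)
  have Enz: "E r \<noteq> 0" for r using E1[of r] by auto
  have Ec: "continuous_on UNIV E" unfolding E_def by (intro continuous_intros)
  define fw where "fw w r = \<phi> (x + apply_bcontfun w r * E r)" for w :: "real \<Rightarrow>\<^sub>C real" and r
  have fwc: "continuous_on UNIV (fw w)" for w
    unfolding fw_def by (intro continuous_on_compose2[OF \<phi>c] continuous_intros Ec) auto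
  define Fw where "Fw w = (SOME F. \<forall>r. DERIV F r :> fw w r)" for w
  have dFw: "DERIV (Fw w) r :> fw w r" for w r
  proof -
    have "\<exists>F. \<forall>r. DERIV F r :> fw w r" by (rule antideriv_exists[OF fwc])
    then show ?thesis unfolding Fw_def by (rule someI_ex[where P = "\<lambda>F. \<forall>r. DERIV F r :> fw w r", THEN spec])
  qed
  define Tf where "Tf w s = (Fw w s - Fw w 0) / E s" for w s
  have Tf_bc: "Tf w \<in> bcontfun" for w
  proof (rule bcontfun_normI)
    have "continuous_on UNIV (Fw w)" by (rule DERIV_cont_on[OF dFw])
    then show "continuous_on UNIV (Tf w)" unfolding Tf_def
      by (intro continuous_intros Ec) (auto simp: Enz)
    show "norm (Tf w s) \<le> M / (2 * L)" for s
    proof -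
      have "\<bar>Fw w s - Fw w 0\<bar> \<le> M * \<bar>s - 0\<bar>"
        by (rule mvt_bound[OF dFw]) (simp add: fw_def M)
      moreover have "M * \<bar>s\<bar> \<le> M / (2 * L) * E s"
      proof -
        have M0: "0 \<le> M" using M[of 0] by linarith
        have "1 + 2 * L * \<bar>s\<bar> \<le> E s" unfolding E_def by (rule exp_ge_add_one_self)
        then have "2 * L * \<bar>s\<bar> \<le> E s" by simp
        then have "M * (2 * L * \<bar>s\<bar>) \<le> M * E s" using M0 by (intro mult_left_mono) auto
        then show ?thesis using L by (simp add: field_simps)
      qed
      ultimately have "\<bar>Fw w s - Fw w 0\<bar> \<le> M / (2 * L) * E s" by simp
      then show ?thesis using E1[of s] by (simp add: Tf_def abs_divide divide_le_eq)
    qed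
  qed
  define T where "T w = Bcontfun (Tf w)" for w
  have Tapp: "apply_bcontfun (T w) = Tf w" for w unfolding T_def using Tf_bc by (rule Bcontfun_inverse)
  have contr: "dist (T w1) (T w2) \<le> 1/2 * dist w1 w2" for w1 w2
  proof (rule dist_bound)
    fix s
    define \<delta> where "\<delta> = dist w1 w2"
    have \<delta>0: "0 \<le> \<delta>" by (simp add: \<delta>_def)
    define D where "D r = Fw w1 r - Fw w2 r" for r
    have dD: "DERIV D r :> fw w1 r - fw w2 r" for r unfolding D_def by (intro DERIV_diff dFw)
    have Db: "\<bar>fw w1 r - fw w2 r\<bar> \<le> L * \<delta> * E r" for r
    proof -
      have "\<bar>fw w1 r - fw w2 r\<bar> \<le> L * \<bar>(x + apply_bcontfun w1 r * E r) - (x + apply_bcontfun w2 r * E r)\<bar>"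
        unfolding fw_def by (rule Lip)
      then have "\<bar>fw w1 r - fw w2 r\<bar> \<le> L * \<bar>apply_bcontfun w1 r * E r - apply_bcontfun w2 r * E r\<bar>"
        by simp
      also have "\<dots> = L * (\<bar>apply_bcontfun w1 r - apply_bcontfun w2 r\<bar> * E r)"
        using E1[of r] by (simp add: left_diff_distrib[symmetric] abs_mult)
      also have "\<dots> \<le> L * (\<delta> * E r)"
        using dist_bounded[of w1 r w2] E1[of r] L by (intro mult_left_mono mult_right_mono) (auto simp: \<delta>_def dist_real_def)
      finally show ?thesis by (simp add: mult.assoc)
    qed
    have key: "\<bar>D s - D 0\<bar> \<le> \<delta> / 2 * E s"
    proof (cases "0 \<le> s")
      case True
      define R where "R r = \<delta> * exp (2 * L * r) / 2" for r
      have "\<bar>D s - D 0\<bar> \<le> R s - R 0"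
      proof (rule deriv_compare[OF True dD])
        fix r assume r: "0 \<le> r" "r \<le> s"
        show "DERIV R r :> \<delta> * L * exp (2 * L * r)"
          unfolding R_def by (auto intro!: derivative_eq_intros)
        show "\<bar>fw w1 r - fw w2 r\<bar> \<le> \<delta> * L * exp (2 * L * r)"
          using Db[of r] r by (simp add: E_def mult_ac)
      qed
      also have "\<dots> \<le> \<delta> / 2 * E s" using True \<delta>0 by (simp add: R_def E_def)
      finally show ?thesis .
    next
      case False
      then have s0: "s \<le> 0" by simp
      define R where "R r = - \<delta> * exp (- 2 * L * r) / 2" for r
      have "\<bar>D 0 - D s\<bar> \<le> R 0 - R s"
      proof (rule deriv_compare[OF s0 dD])
        fix r assume r: "s \<le> r" "r \<le> 0"
        show "DERIV R r :> \<delta> * L * exp (- 2 * L * r)"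
          unfolding R_def by (auto intro!: derivative_eq_intros)
        show "\<bar>fw w1 r - fw w2 r\<bar> \<le> \<delta> * L * exp (- 2 * L * r)"
          using Db[of r] r by (simp add: E_def mult_ac)
      qed
      also have "\<dots> \<le> \<delta> / 2 * E s" using s0 \<delta>0 by (simp add: R_def E_def)
      finally show ?thesis by (simp add: abs_minus_commute)
    qed
    have "Tf w1 s - Tf w2 s = (D s - D 0) / E s" by (simp add: Tf_def D_def diff_divide_distrib)
    then have "\<bar>Tf w1 s - Tf w2 s\<bar> = \<bar>D s - D 0\<bar> / E s" using E1[of s] by (simp add: abs_divide)
    also have "\<dots> \<le> \<delta> / 2" using key E1[of s] by (simp add: divide_le_eq)
    finally show "dist (apply_bcontfun (T w1) s) (apply_bcontfun (T w2) s) \<le> 1/2 * dist w1 w2"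
      by (simp add: Tapp dist_real_def \<delta>_def)
  qed
  obtain w where w: "T w = w" using banach_fix_type[of "1/2" T] contr by auto
  define u where "u s = x + apply_bcontfun w s * E s" for s
  have ueq: "u s = x + (Fw w s - Fw w 0)" for s
  proof -
    have "apply_bcontfun w s = Tf w s" using Tapp[of w] w by simp
    then show ?thesis using E1[of s] by (simp add: u_def Tf_def)
  qed
  have "DERIV u s :> \<phi> (u s)" for s
  proof -
    have "DERIV (\<lambda>s. x + (Fw w s - Fw w 0)) s :> fw w s"
      by (auto intro!: derivative_eq_intros dFw)
    moreover have "fw w s = \<phi> (x + (Fw w s - Fw w 0))"
      by (simp add: fw_def u_def[symmetric] ueq)
    ultimately have "DERIV (\<lambda>s. x + (Fw w s - Fw w 0)) s :> \<phi> (x + (Fw w s - Fw w 0))" by simp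
    moreover have "u = (\<lambda>s. x + (Fw w s - Fw w 0))" by (rule ext) (rule ueq)
    ultimately show ?thesis by simp
  qed
  moreover have "u 0 = x" by (simp add: ueq)
  ultimately show ?thesis by blast
qed


lemma exp_minus_one_bound: "\<bar>exp a - 1\<bar> \<le> \<bar>a\<bar> * exp \<bar>a\<bar>" for a :: real
proof (cases "0 \<le> a")
  case True
  have "1 + (-a) \<le> exp (-a)" by (rule exp_ge_add_one_self)
  then have "(1 - a) * exp a \<le> exp (-a) * exp a" by (intro mult_right_mono) auto
  then have "exp a - a * exp a \<le> 1" by (simp add: exp_minus field_simps)
  then show ?thesis using True by simp
next
  case False
  have h1: "1 + a \<le> exp a" by (rule exp_ge_add_one_self)
  have h2: "exp a \<le> 1" using False by simp
  have h3: "-a \<le> -a * exp (-a)" using mult_left_mono[of 1 "exp (-a)" "-a"] False by simp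
  have "\<bar>exp a - 1\<bar> = 1 - exp a" using h2 by simp
  also have "\<dots> \<le> -a" using h1 by linarith
  also have "\<dots> \<le> -a * exp (-a)" by (rule h3)
  also have "\<dots> = \<bar>a\<bar> * exp \<bar>a\<bar>" using False by simp
  finally show ?thesis .
qed

lemma divdiff_close:
  fixes \<phi> \<psi> :: "real \<Rightarrow> real"
  assumes d: "\<And>y. DERIV \<phi> y :> \<psi> y" and L: "\<And>y z. \<bar>\<psi> y - \<psi> z\<bar> \<le> B * \<bar>y - z\<bar>"
    and ab: "a \<noteq> b" and B: "0 \<le> B"
  shows "\<bar>(\<phi> a - \<phi> b) / (a - b) - \<psi> a\<bar> \<le> B * \<bar>a - b\<bar>"
proof -
  obtain \<xi> where \<xi>: "min a b < \<xi>" "\<xi> < max a b" "(\<phi> a - \<phi> b) / (a - b) = \<psi> \<xi>"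
  proof (cases "a < b")
    case True
    from MVT2[OF True, of \<phi> \<psi>] d obtain \<xi> where "a < \<xi>" "\<xi> < b" "\<phi> b - \<phi> a = (b - a) * \<psi> \<xi>" by blast
    then show ?thesis using True by (intro that[of \<xi>]) (auto simp: field_simps)
  next
    case False
    then have "b < a" using ab by simp
    from MVT2[OF this, of \<phi> \<psi>] d obtain \<xi> where "b < \<xi>" "\<xi> < a" "\<phi> a - \<phi> b = (a - b) * \<psi> \<xi>" by blast
    then show ?thesis using \<open>b < a\<close> by (intro that[of \<xi>]) (auto simp: field_simps)
  qed
  have "\<bar>\<psi> \<xi> - \<psi> a\<bar> \<le> B * \<bar>\<xi> - a\<bar>" by (rule L)
  also have "\<dots> \<le> B * \<bar>a - b\<bar>" using \<xi> B by (intro mult_left_mono) auto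
  finally show ?thesis using \<xi>(3) by simp
qed

locale flow_setup =
  fixes \<phi> \<psi> \<psi>2 \<psi>3 :: "real \<Rightarrow> real" and M0 B0 B B3 :: real
  assumes d\<phi>: "\<And>y. DERIV \<phi> y :> \<psi> y" and d\<psi>: "\<And>y. DERIV \<psi> y :> \<psi>2 y"
    and d\<psi>2: "\<And>y. DERIV \<psi>2 y :> \<psi>3 y"
    and b\<phi>: "\<And>y. \<bar>\<phi> y\<bar> \<le> M0" and b\<psi>: "\<And>y. \<bar>\<psi> y\<bar> \<le> B0"
    and b\<psi>2: "\<And>y. \<bar>\<psi>2 y\<bar> \<le> B" and b\<psi>3: "\<And>y. \<bar>\<psi>3 y\<bar> \<le> B3"
begin

lemma consts_nonneg: "0 \<le> M0" "0 \<le> B0" "0 \<le> B" "0 \<le> B3"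
  using b\<phi>[of 0] b\<psi>[of 0] b\<psi>2[of 0] b\<psi>3[of 0] by linarith+

lemma Lip\<phi>: "\<bar>\<phi> a - \<phi> b\<bar> \<le> B0 * \<bar>a - b\<bar>" by (rule mvt_bound[OF d\<phi> b\<psi>])
lemma Lip\<psi>: "\<bar>\<psi> a - \<psi> b\<bar> \<le> B * \<bar>a - b\<bar>" by (rule mvt_bound[OF d\<psi> b\<psi>2])
lemma Lip\<psi>2: "\<bar>\<psi>2 a - \<psi>2 b\<bar> \<le> B3 * \<bar>a - b\<bar>" by (rule mvt_bound[OF d\<psi>2 b\<psi>3])

lemma cont\<psi>: "continuous_on UNIV \<psi>" by (rule DERIV_cont_on[OF d\<psi>])
lemma cont\<psi>2: "continuous_on UNIV \<psi>2" by (rule DERIV_cont_on[OF d\<psi>2])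

lemma sol_unique:
  assumes "\<And>s. DERIV u s :> \<phi> (u s)" "\<And>s. DERIV v s :> \<phi> (v s)" "u s0 = v s0"
  shows "u s = v s"
  by (rule ode_unique[OF Lip\<phi> consts_nonneg(2) assms])

lemma flow_ex1: "\<exists>!u. u 0 = x \<and> (\<forall>s. DERIV u s :> \<phi> (u s))"
proof -
  have Lip': "\<bar>\<phi> a - \<phi> b\<bar> \<le> (B0 + 1) * \<bar>a - b\<bar>" for a b
  proof -
    have "B0 * \<bar>a - b\<bar> \<le> (B0 + 1) * \<bar>a - b\<bar>" by (intro mult_right_mono) auto
    then show ?thesis using Lip\<phi>[of a b] by linarith
  qed
  have ex: "\<exists>u. u 0 = x \<and> (\<forall>s. DERIV u s :> \<phi> (u s))"
    by (rule ode_exists[OF Lip' _ b\<phi>]) (use consts_nonneg in simp)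
  have un: "u = v" if u: "u 0 = x \<and> (\<forall>s. DERIV u s :> \<phi> (u s))"
    and v: "v 0 = x \<and> (\<forall>s. DERIV v s :> \<phi> (v s))" for u v
  proof (rule ext)
    fix s
    have du: "\<And>s. DERIV u s :> \<phi> (u s)" using u by blast
    have dv: "\<And>s. DERIV v s :> \<phi> (v s)" using v by blast
    have e0: "u 0 = v 0" using u v by simp
    show "u s = v s" by (rule sol_unique[OF du dv e0])
  qed
  show ?thesis by (rule ex_ex1I[OF ex un])
qed

lemma flow_props: "flow \<phi> 0 x = x" "DERIV (\<lambda>s. flow \<phi> s x) s :> \<phi> (flow \<phi> s x)"
proof -
  define U where "U = (THE u. u 0 = x \<and> (\<forall>s. DERIV u s :> \<phi> (u s)))"
  have U: "U 0 = x \<and> (\<forall>s. DERIV U s :> \<phi> (U s))" unfolding U_def by (rule theI'[OF flow_ex1])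
  have "(\<lambda>s. flow \<phi> s x) = U" by (simp add: flow_def U_def fun_eq_iff)
  then show "flow \<phi> 0 x = x" "DERIV (\<lambda>s. flow \<phi> s x) s :> \<phi> (flow \<phi> s x)" using U by auto
qed

lemma flow_cont: "continuous_on UNIV (\<lambda>s. flow \<phi> s x)"
  by (rule DERIV_cont_on[OF flow_props(2)])

lemma flow_disp: "\<bar>flow \<phi> s y - y\<bar> \<le> M0 * \<bar>s\<bar>"
  using mvt_bound0[of "\<lambda>s. flow \<phi> s y" "\<lambda>s. \<phi> (flow \<phi> s y)" s M0] flow_props b\<phi> by simp

lemma flow_inj: assumes "y \<noteq> z" shows "flow \<phi> s y \<noteq> flow \<phi> s z"
proof
  assume "flow \<phi> s y = flow \<phi> s z"
  then have "flow \<phi> 0 y = flow \<phi> 0 z"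
    by (rule sol_unique[of "\<lambda>s. flow \<phi> s y" "\<lambda>s. flow \<phi> s z" s, OF flow_props(2) flow_props(2)])
  then show False using assms by (simp add: flow_props)
qed

definition Q where "Q y z s = (flow \<phi> s y - flow \<phi> s z) / (y - z)"
definition Ez where "Ez y z s = ln (Q y z s)"

lemma Q_pos: assumes "y \<noteq> z" shows "0 < Q y z s"
proof (rule ccontr)
  assume "\<not> 0 < Q y z s"
  then have le: "Q y z s \<le> 0" by simp
  have Q0: "Q y z 0 = 1" using assms by (simp add: Q_def flow_props)
  have nz: "Q y z r \<noteq> 0" for r using flow_inj[OF assms, of r] assms by (simp add: Q_def)
  have c: "continuous_on A (Q y z)" for A
    unfolding Q_def by (intro continuous_intros continuous_on_subset[OF flow_cont]) (use assms in auto)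
  show False
  proof (cases "0 \<le> s")
    case True
    from IVT2'[of "Q y z" s 0 0, OF le _ True c] Q0 nz show False by auto
  next
    case False
    then have "s \<le> 0" by simp
    from IVT'[of "Q y z" s 0 0, OF le _ this c] Q0 nz show False by auto
  qed
qed

definition m where "m y z s = (\<phi> (flow \<phi> s y) - \<phi> (flow \<phi> s z)) / (flow \<phi> s y - flow \<phi> s z)"

lemma Ez_deriv: assumes "y \<noteq> z" shows "DERIV (Ez y z) s :> m y z s"
proof -
  have dQ: "DERIV (Q y z) s :> (\<phi> (flow \<phi> s y) - \<phi> (flow \<phi> s z)) / (y - z)"
    using assms unfolding Q_def[abs_def] by (auto intro!: derivative_eq_intros flow_props)
  have "DERIV (\<lambda>s. ln (Q y z s)) s :> inverse (Q y z s) * ((\<phi> (flow \<phi> s y) - \<phi> (flow \<phi> s z)) / (y - z))"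
    by (rule DERIV_chain2[OF DERIV_ln[OF Q_pos[OF assms]] dQ])
  moreover have "inverse (Q y z s) * ((\<phi> (flow \<phi> s y) - \<phi> (flow \<phi> s z)) / (y - z)) = m y z s"
  proof -
    have nz1: "y - z \<noteq> 0" using assms by simp
    have nz2: "flow \<phi> s y - flow \<phi> s z \<noteq> 0" using flow_inj[OF assms, of s] by simp
    have "inverse (Q y z s) = (y - z) / (flow \<phi> s y - flow \<phi> s z)" by (simp add: Q_def inverse_divide)
    moreover have "(y - z) / (flow \<phi> s y - flow \<phi> s z) * ((\<phi> (flow \<phi> s y) - \<phi> (flow \<phi> s z)) / (y - z))
        = (\<phi> (flow \<phi> s y) - \<phi> (flow \<phi> s z)) / (flow \<phi> s y - flow \<phi> s z)"
      using nz1 nz2 by (simp add: divide_simps)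
    ultimately show ?thesis by (simp add: m_def)
  qed
  ultimately show ?thesis by (simp add: Ez_def[abs_def])
qed

lemma m_bound: "y \<noteq> z \<Longrightarrow> \<bar>m y z s\<bar> \<le> B0"
  using Lip\<phi>[of "flow \<phi> s y" "flow \<phi> s z"] flow_inj[of y z s]
  by (simp add: m_def abs_divide divide_le_eq)

lemma Ez0: "y \<noteq> z \<Longrightarrow> Ez y z 0 = 0" by (simp add: Ez_def Q_def flow_props)

lemma Ez_bound: "y \<noteq> z \<Longrightarrow> \<bar>Ez y z s\<bar> \<le> B0 * \<bar>s\<bar>"
  using mvt_bound0[OF Ez_deriv, of y z s B0] m_bound Ez0 by auto

lemma flow_lip: "\<bar>flow \<phi> s y - flow \<phi> s z\<bar> \<le> \<bar>y - z\<bar> * exp (B0 * \<bar>s\<bar>)"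
proof (cases "y = z")
  case True then show ?thesis by simp
next
  case False
  have "flow \<phi> s y - flow \<phi> s z = (y - z) * Q y z s" using False by (simp add: Q_def)
  also have "Q y z s = exp (Ez y z s)" using Q_pos[OF False] by (simp add: Ez_def)
  finally have "\<bar>flow \<phi> s y - flow \<phi> s z\<bar> = \<bar>y - z\<bar> * exp (Ez y z s)" by (simp add: abs_mult)
  also have "\<dots> \<le> \<bar>y - z\<bar> * exp (B0 * \<bar>s\<bar>)" using Ez_bound[OF False, of s] by (intro mult_left_mono) auto
  finally show ?thesis .
qed

definition Aff where "Aff y = (SOME F. \<forall>s. DERIV F s :> \<psi> (flow \<phi> s y))"
definition Lam where "Lam t y = Aff y t - Aff y 0"

lemma Lam_deriv: "DERIV (\<lambda>s. Lam s y) s :> \<psi> (flow \<phi> s y)"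
proof -
  have "continuous_on UNIV (\<lambda>s. \<psi> (flow \<phi> s y))"
    by (rule continuous_on_compose2[OF cont\<psi> flow_cont]) auto
  then have "\<exists>F. \<forall>s. DERIV F s :> \<psi> (flow \<phi> s y)" by (rule antideriv_exists)
  then have "\<forall>s. DERIV (Aff y) s :> \<psi> (flow \<phi> s y)" unfolding Aff_def by (rule someI_ex)
  then show ?thesis unfolding Lam_def by (auto intro!: derivative_eq_intros)
qed

lemma Lam0: "Lam 0 y = 0" by (simp add: Lam_def)

lemma Lam_bound: "\<bar>Lam s y\<bar> \<le> B0 * \<bar>s\<bar>"
  using mvt_bound0[of "\<lambda>s. Lam s y" "\<lambda>s. \<psi> (flow \<phi> s y)" s B0] Lam_deriv b\<psi> Lam0 by simp

lemma Ez_Lam: assumes "y \<noteq> z"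
  shows "\<bar>Ez y z t - Lam t y\<bar> \<le> B * \<bar>y - z\<bar> * exp (B0 * \<bar>t\<bar>) * \<bar>t\<bar>"
proof -
  have d: "DERIV (\<lambda>s. Ez y z s - Lam s y) s :> m y z s - \<psi> (flow \<phi> s y)" for s
    by (intro DERIV_diff Ez_deriv[OF assms] Lam_deriv)
  have b: "\<bar>m y z s - \<psi> (flow \<phi> s y)\<bar> \<le> B * \<bar>y - z\<bar> * exp (B0 * \<bar>t\<bar>)" if "\<bar>s\<bar> \<le> \<bar>t\<bar>" for s
  proof -
    have "\<bar>m y z s - \<psi> (flow \<phi> s y)\<bar> \<le> B * \<bar>flow \<phi> s y - flow \<phi> s z\<bar>"
      unfolding m_def by (rule divdiff_close[OF d\<phi> Lip\<psi> flow_inj[OF assms] consts_nonneg(3)])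
    also have "\<dots> \<le> B * (\<bar>y - z\<bar> * exp (B0 * \<bar>s\<bar>))"
      by (intro mult_left_mono flow_lip) (use consts_nonneg in auto)
    also have "\<dots> \<le> B * (\<bar>y - z\<bar> * exp (B0 * \<bar>t\<bar>))"
      using that consts_nonneg by (intro mult_left_mono) (auto intro: mult_left_mono)
    finally show ?thesis by (simp add: mult.assoc)
  qed
  have "\<bar>(Ez y z t - Lam t y) - (Ez y z 0 - Lam 0 y)\<bar> \<le> B * \<bar>y - z\<bar> * exp (B0 * \<bar>t\<bar>) * \<bar>t\<bar>"
    by (rule mvt_bound0[of "\<lambda>s. Ez y z s - Lam s y" _ t "B * \<bar>y - z\<bar> * exp (B0 * \<bar>t\<bar>)", OF d b])
  then show ?thesis using Ez0[OF assms] Lam0 by simp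
qed

lemma flow_deriv_y: "DERIV (flow \<phi> t) y :> exp (Lam t y)"
proof -
  define C where "C = B * exp (B0 * \<bar>t\<bar>) * \<bar>t\<bar>"
  have lim1: "((\<lambda>z. Ez y z t) \<longlongrightarrow> Lam t y) (at y)"
  proof -
    have "((\<lambda>z. Ez y z t - Lam t y) \<longlongrightarrow> 0) (at y)"
    proof (rule Lim_null_comparison)
      show "\<forall>\<^sub>F z in at y. norm (Ez y z t - Lam t y) \<le> C * \<bar>z - y\<bar>"
        unfolding eventually_at
      proof (intro exI[of _ 1] conjI ballI impI)
        fix z assume "z \<in> UNIV" "z \<noteq> y \<and> dist z y < 1"
        then have yz: "y \<noteq> z" by auto
        have "\<bar>Ez y z t - Lam t y\<bar> \<le> B * \<bar>y - z\<bar> * exp (B0 * \<bar>t\<bar>) * \<bar>t\<bar>" by (rule Ez_Lam[OF yz])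
        also have "\<dots> = C * \<bar>z - y\<bar>" by (simp add: C_def abs_minus_commute mult_ac)
        finally show "norm (Ez y z t - Lam t y) \<le> C * \<bar>z - y\<bar>" by simp
      qed simp
      have "((\<lambda>z. C * \<bar>z - y\<bar>) \<longlongrightarrow> C * \<bar>y - y\<bar>) (at y)" by (intro tendsto_intros)
      then show "((\<lambda>z. C * \<bar>z - y\<bar>) \<longlongrightarrow> 0) (at y)" by simp
    qed
    then show ?thesis by (simp add: LIM_zero_iff)
  qed
  then have lim2: "((\<lambda>z. exp (Ez y z t)) \<longlongrightarrow> exp (Lam t y)) (at y)" by (rule tendsto_exp)
  have ev: "\<forall>\<^sub>F z in at y. exp (Ez y z t) = (flow \<phi> t z - flow \<phi> t y) / (z - y)"
    unfolding eventually_at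
  proof (intro exI[of _ 1] conjI ballI impI)
    fix z assume "z \<in> UNIV" "z \<noteq> y \<and> dist z y < 1"
    then have zy: "y \<noteq> z" by auto
    have "exp (Ez y z t) = Q y z t" using Q_pos[OF zy] by (simp add: Ez_def)
    also have "\<dots> = (- (flow \<phi> t z - flow \<phi> t y)) / (- (z - y))" by (simp add: Q_def)
    also have "\<dots> = (flow \<phi> t z - flow \<phi> t y) / (z - y)" by (rule minus_divide_divide)
    finally show "exp (Ez y z t) = (flow \<phi> t z - flow \<phi> t y) / (z - y)" .
  qed simp
  have "((\<lambda>z. (flow \<phi> t z - flow \<phi> t y) / (z - y)) \<longlongrightarrow> exp (Lam t y)) (at y)"
    using tendsto_cong[OF ev] lim2 by simp
  then show ?thesis unfolding has_field_derivative_iff by simp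
qed

lemma G1: "\<bar>Lam t y - t * \<psi> y\<bar> \<le> (B * M0) * t\<^sup>2"
proof -
  have d: "DERIV (\<lambda>s. Lam s y - s * \<psi> y) s :> \<psi> (flow \<phi> s y) - \<psi> y" for s
    by (auto intro!: derivative_eq_intros Lam_deriv)
  have b: "\<bar>\<psi> (flow \<phi> s y) - \<psi> y\<bar> \<le> B * M0 * \<bar>t\<bar>" if "\<bar>s\<bar> \<le> \<bar>t\<bar>" for s
  proof -
    have "\<bar>\<psi> (flow \<phi> s y) - \<psi> y\<bar> \<le> B * \<bar>flow \<phi> s y - y\<bar>" by (rule Lip\<psi>)
    also have "\<dots> \<le> B * (M0 * \<bar>s\<bar>)" by (intro mult_left_mono flow_disp) (use consts_nonneg in auto)
    also have "\<dots> \<le> B * (M0 * \<bar>t\<bar>)" using that consts_nonneg by (intro mult_left_mono) auto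
    finally show ?thesis by (simp add: mult.assoc)
  qed
  have "\<bar>(Lam t y - t * \<psi> y) - (Lam 0 y - 0 * \<psi> y)\<bar> \<le> B * M0 * \<bar>t\<bar> * \<bar>t\<bar>"
    by (rule mvt_bound0[of "\<lambda>s. Lam s y - s * \<psi> y" _ t "B * M0 * \<bar>t\<bar>", OF d b])
  moreover have "\<bar>t\<bar> * \<bar>t\<bar> = t\<^sup>2" by (simp add: power2_eq_square)
  ultimately show ?thesis using Lam0 by (simp add: mult.assoc)
qed

definition K2 where "K2 = B * B0 * exp B0 + B3 * M0"

lemma k_deriv: "DERIV (\<lambda>x. \<psi> (flow \<phi> s x) - \<psi> x) x :> \<psi>2 (flow \<phi> s x) * exp (Lam s x) - \<psi>2 x"
  by (intro DERIV_diff DERIV_chain2[OF d\<psi> flow_deriv_y] d\<psi>)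

lemma k_deriv_bound: assumes "\<bar>s\<bar> \<le> 1"
  shows "\<bar>\<psi>2 (flow \<phi> s x) * exp (Lam s x) - \<psi>2 x\<bar> \<le> K2 * \<bar>s\<bar>"
proof -
  have e: "\<psi>2 (flow \<phi> s x) * exp (Lam s x) - \<psi>2 x
         = \<psi>2 (flow \<phi> s x) * (exp (Lam s x) - 1) + (\<psi>2 (flow \<phi> s x) - \<psi>2 x)"
    by (simp add: algebra_simps)
  have a: "\<bar>exp (Lam s x) - 1\<bar> \<le> B0 * \<bar>s\<bar> * exp B0"
  proof -
    have "\<bar>exp (Lam s x) - 1\<bar> \<le> \<bar>Lam s x\<bar> * exp \<bar>Lam s x\<bar>" by (rule exp_minus_one_bound)
    also have "\<dots> \<le> (B0 * \<bar>s\<bar>) * exp B0"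
    proof (intro mult_mono)
      show "\<bar>Lam s x\<bar> \<le> B0 * \<bar>s\<bar>" by (rule Lam_bound)
      have "B0 * \<bar>s\<bar> \<le> B0 * 1" using assms consts_nonneg by (intro mult_left_mono) auto
      then show "exp \<bar>Lam s x\<bar> \<le> exp B0" using Lam_bound[of s x] by simp
    qed (use consts_nonneg in auto)
    finally show ?thesis .
  qed
  have "\<bar>\<psi>2 (flow \<phi> s x) * (exp (Lam s x) - 1)\<bar> \<le> B * (B0 * \<bar>s\<bar> * exp B0)"
    unfolding abs_mult by (intro mult_mono b\<psi>2 a) (use consts_nonneg in auto)
  moreover have "\<bar>\<psi>2 (flow \<phi> s x) - \<psi>2 x\<bar> \<le> B3 * (M0 * \<bar>s\<bar>)"
    using order_trans[OF Lip\<psi>2[of "flow \<phi> s x" x] mult_left_mono[OF flow_disp[of s x]]] consts_nonneg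
    by simp
  ultimately have "\<bar>\<psi>2 (flow \<phi> s x) * (exp (Lam s x) - 1) + (\<psi>2 (flow \<phi> s x) - \<psi>2 x)\<bar>
      \<le> B * (B0 * \<bar>s\<bar> * exp B0) + B3 * (M0 * \<bar>s\<bar>)"
    using abs_triangle_ineq[of "\<psi>2 (flow \<phi> s x) * (exp (Lam s x) - 1)" "\<psi>2 (flow \<phi> s x) - \<psi>2 x"]
    by linarith
  also have "\<dots> = K2 * \<bar>s\<bar>" by (simp add: K2_def algebra_simps)
  finally show ?thesis unfolding e .
qed

lemma K2_nonneg: "0 \<le> K2" unfolding K2_def using consts_nonneg by simp

lemma G2: assumes "\<bar>t\<bar> \<le> 1"
  shows "\<bar>(Lam t y - t * \<psi> y) - (Lam t z - t * \<psi> z)\<bar> \<le> K2 * t\<^sup>2 * \<bar>y - z\<bar>"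
proof -
  have d: "DERIV (\<lambda>s. (Lam s y - s * \<psi> y) - (Lam s z - s * \<psi> z)) s
       :> (\<psi> (flow \<phi> s y) - \<psi> y) - (\<psi> (flow \<phi> s z) - \<psi> z)" for s
    by (auto intro!: derivative_eq_intros Lam_deriv)
  have b: "\<bar>(\<psi> (flow \<phi> s y) - \<psi> y) - (\<psi> (flow \<phi> s z) - \<psi> z)\<bar> \<le> K2 * \<bar>t\<bar> * \<bar>y - z\<bar>"
    if s: "\<bar>s\<bar> \<le> \<bar>t\<bar>" for s
  proof -
    have s1: "\<bar>s\<bar> \<le> 1" using s assms by simp
    have "\<bar>(\<psi> (flow \<phi> s y) - \<psi> y) - (\<psi> (flow \<phi> s z) - \<psi> z)\<bar> \<le> K2 * \<bar>s\<bar> * \<bar>y - z\<bar>"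
      by (rule mvt_bound[OF k_deriv k_deriv_bound[OF s1]])
    also have "\<dots> \<le> K2 * \<bar>t\<bar> * \<bar>y - z\<bar>"
      using s K2_nonneg by (intro mult_right_mono mult_left_mono) auto
    finally show ?thesis .
  qed
  have "\<bar>((Lam t y - t * \<psi> y) - (Lam t z - t * \<psi> z)) - ((Lam 0 y - 0 * \<psi> y) - (Lam 0 z - 0 * \<psi> z))\<bar>
      \<le> K2 * \<bar>t\<bar> * \<bar>y - z\<bar> * \<bar>t\<bar>"
    by (rule mvt_bound0[of "\<lambda>s. (Lam s y - s * \<psi> y) - (Lam s z - s * \<psi> z)" _ t "K2 * \<bar>t\<bar> * \<bar>y - z\<bar>", OF d b])
  moreover have "K2 * \<bar>t\<bar> * \<bar>y - z\<bar> * \<bar>t\<bar> = K2 * t\<^sup>2 * \<bar>y - z\<bar>" by (simp add: power2_eq_square mult_ac)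
  ultimately show ?thesis using Lam0 by simp
qed

end


lemma F_lip:
  fixes a1 a2 c :: real
  assumes "\<bar>a1\<bar> \<le> c" "\<bar>a2\<bar> \<le> c" "c \<le> 1/2"
  shows "\<bar>(ln (1 + a1) - a1) - (ln (1 + a2) - a2)\<bar> \<le> 2 * c * \<bar>a1 - a2\<bar>"
proof -
  have main: "\<bar>(ln (1 + b) - b) - (ln (1 + a) - a)\<bar> \<le> 2 * c * (b - a)"
    if ab: "a \<le> b" "\<bar>a\<bar> \<le> c" "\<bar>b\<bar> \<le> c" for a b
  proof (rule mvt_bound_ivl[OF ab(1)])
    fix x assume x: "a \<le> x" "x \<le> b"
    have x1: "\<bar>x\<bar> \<le> c"
    proof (rule abs_leI)
      show "x \<le> c" using x abs_le_D1[OF ab(3)] by linarith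
      show "- x \<le> c" using x abs_le_D2[OF ab(2)] by linarith
    qed
    have xm: "- x \<le> c" using abs_le_D2[OF x1] .
    have pos: "0 < 1 + x" using xm assms(3) by linarith
    show "DERIV (\<lambda>x. ln (1 + x) - x) x :> 1 / (1 + x) - 1"
      using pos by (auto intro!: derivative_eq_intros simp: field_simps)
    have "1 / (1 + x) - 1 = - x / (1 + x)" using pos by (simp add: field_simps)
    then have "\<bar>1 / (1 + x) - 1\<bar> = \<bar>x\<bar> / (1 + x)" using pos by (simp add: abs_divide)
    also have "\<dots> \<le> 2 * \<bar>x\<bar>"
    proof -
      have "1 \<le> 2 + 2 * x" using xm assms(3) by linarith
      then have "1 \<le> 2 * (1 + x)" by (simp add: distrib_left)
      then have "\<bar>x\<bar> * 1 \<le> \<bar>x\<bar> * (2 * (1 + x))" by (intro mult_left_mono) auto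
      then show ?thesis using pos by (simp add: divide_le_eq mult_ac)
    qed
    also have "\<dots> \<le> 2 * c" using x1 by simp
    finally show "\<bar>1 / (1 + x) - 1\<bar> \<le> 2 * c" .
  qed
  show ?thesis
  proof (cases "a1 \<le> a2")
    case True
    from main[OF True assms(1,2)] True show ?thesis by (simp add: abs_minus_commute)
  next
    case False
    then have "a2 \<le> a1" by simp
    from main[OF this assms(2,1)] False show ?thesis by simp
  qed
qed

lemma lin_map_deriv:
  fixes \<phi> g :: "real \<Rightarrow> real" and \<beta> B B0 :: real
  assumes g: "in_G g"
    and d\<phi>: "\<And>y. DERIV \<phi> y :> deriv \<phi> y"
    and \<psi>L: "\<And>y z. \<bar>deriv \<phi> y - deriv \<phi> z\<bar> \<le> B * \<bar>y - z\<bar>"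
    and \<psi>b: "\<And>y. \<bar>deriv \<phi> y\<bar> \<le> B0"
    and sum_c: "(\<lambda>a. \<bar>V0_term \<phi> g a\<bar>) summable_on jumps g"
    and B: "0 \<le> B"
  shows "DERIV (\<lambda>t. Ybeta \<beta> (lin_map \<phi> t) g) 0 :> Vbeta \<beta> \<phi> g"
proof -
  have B0: "0 \<le> B0" using \<psi>b[of 0] by linarith
  define \<epsilon> where "\<epsilon> = 1 / (2 * (B0 + 1))"
  have \<epsilon>: "0 < \<epsilon>" using B0 by (simp add: \<epsilon>_def)
  have small: "\<bar>t\<bar> * B0 \<le> 1/2" if "\<bar>t\<bar> < \<epsilon>" for t
  proof -
    have "\<bar>t\<bar> * B0 \<le> \<epsilon> * B0" using that B0 by (intro mult_right_mono) auto
    also have "\<dots> \<le> 1/2" using B0 by (simp add: \<epsilon>_def field_simps)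
    finally show ?thesis .
  qed
  have tpsi: "\<bar>t * deriv \<phi> y\<bar> \<le> \<bar>t\<bar> * B0" for t y
    unfolding abs_mult by (intro mult_left_mono \<psi>b) auto
  define L where "L t y = ln (1 + t * deriv \<phi> y)" for t y
  show ?thesis
  proof (rule abstract_deriv[OF g d\<phi> \<psi>L \<psi>b sum_c \<epsilon> _ B, of "2 * B0\<^sup>2 + 2 * B0 * B" "lin_map \<phi>" L])
    show "0 \<le> 2 * B0\<^sup>2 + 2 * B0 * B" using B0 B by simp
    fix t y z :: real assume t: "\<bar>t\<bar> < \<epsilon>"
    have a: "\<bar>t * deriv \<phi> x\<bar> \<le> 1/2" for x using tpsi[of t x] small[OF t] by linarith
    have pos: "0 < 1 + t * deriv \<phi> x" for x using abs_le_D2[OF a[of x]] by linarith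
    show "DERIV (lin_map \<phi> t) y :> exp (L t y)"
    proof -
      have "DERIV (lin_map \<phi> t) y :> 1 + t * deriv \<phi> y"
        unfolding lin_map_def[abs_def] by (auto intro!: derivative_eq_intros d\<phi>)
      then show ?thesis using pos[of y] by (simp add: L_def)
    qed
    show "\<bar>L t y - t * deriv \<phi> y\<bar> \<le> (2 * B0\<^sup>2 + 2 * B0 * B) * t\<^sup>2"
    proof -
      let ?a = "t * deriv \<phi> y"
      have l1: "?a - 2 * ?a\<^sup>2 \<le> ln (1 + ?a)" by (rule ln_lower[OF a])
      have l2: "ln (1 + ?a) \<le> ?a" using pos[of y] by (intro ln_add_one_self_le_self2) auto
      have "\<bar>L t y - ?a\<bar> \<le> 2 * ?a\<^sup>2" using l1 l2 unfolding L_def by (simp add: abs_le_iff)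
      also have "?a\<^sup>2 \<le> (\<bar>t\<bar> * B0)\<^sup>2" using power_mono[OF tpsi[of t y] abs_ge_zero, of 2] by simp
      then have "2 * ?a\<^sup>2 \<le> 2 * B0\<^sup>2 * t\<^sup>2" by (simp add: power_mult_distrib mult_ac)
      also have "\<dots> \<le> (2 * B0\<^sup>2 + 2 * B0 * B) * t\<^sup>2" using B0 B by (intro mult_right_mono) auto
      finally show ?thesis .
    qed
    show "\<bar>(L t y - t * deriv \<phi> y) - (L t z - t * deriv \<phi> z)\<bar> \<le> (2 * B0\<^sup>2 + 2 * B0 * B) * t\<^sup>2 * \<bar>y - z\<bar>"
    proof -
      have c: "\<bar>t\<bar> * B0 \<le> 1/2" using small[OF t] .
      have "\<bar>(L t y - t * deriv \<phi> y) - (L t z - t * deriv \<phi> z)\<bar>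
            \<le> 2 * (\<bar>t\<bar> * B0) * \<bar>t * deriv \<phi> y - t * deriv \<phi> z\<bar>"
        unfolding L_def by (rule F_lip[OF tpsi tpsi c])
      also have "\<bar>t * deriv \<phi> y - t * deriv \<phi> z\<bar> = \<bar>t\<bar> * \<bar>deriv \<phi> y - deriv \<phi> z\<bar>"
        by (simp add: abs_mult[symmetric] right_diff_distrib)
      also have "2 * (\<bar>t\<bar> * B0) * (\<bar>t\<bar> * \<bar>deriv \<phi> y - deriv \<phi> z\<bar>) \<le> 2 * (\<bar>t\<bar> * B0) * (\<bar>t\<bar> * (B * \<bar>y - z\<bar>))"
        using B0 by (intro mult_left_mono \<psi>L) auto
      also have "\<dots> = (2 * B0 * B) * t\<^sup>2 * \<bar>y - z\<bar>" by (simp add: power2_eq_square mult_ac)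
      also have "\<dots> \<le> (2 * B0\<^sup>2 + 2 * B0 * B) * t\<^sup>2 * \<bar>y - z\<bar>"
        using B0 by (intro mult_right_mono) auto
      finally show ?thesis .
    qed
  qed
qed

theorem lemma5p1:
  fixes \<phi> g :: "real \<Rightarrow> real" and \<beta> :: real
  assumes "smooth_periodic \<phi>" and "\<beta> \<ge> 0" and "in_G g"
  shows "(\<lambda>a. \<bar>V0_term \<phi> g a\<bar>) summable_on jumps g
    \<and> \<bar>V0 \<phi> g\<bar> \<le> (\<Sum>\<^sub>\<infinity>a\<in>jumps g. \<bar>V0_term \<phi> g a\<bar>)
    \<and> (\<Sum>\<^sub>\<infinity>a\<in>jumps g. \<bar>V0_term \<phi> g a\<bar>)
           \<le> 1/2 * integral {0..1} (\<lambda>x. \<bar>deriv (deriv \<phi>) x\<bar>)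
    \<and> \<bar>Vbeta \<beta> \<phi> g\<bar> \<le> (1/2 + \<beta>) * integral {0..1} (\<lambda>x. \<bar>deriv (deriv \<phi>) x\<bar>)
    \<and> ((\<lambda>t. Ybeta \<beta> (flow \<phi> t) g) has_real_derivative Vbeta \<beta> \<phi> g) (at 0)
    \<and> ((\<lambda>t. Ybeta \<beta> (lin_map \<phi> t) g) has_real_derivative Vbeta \<beta> \<phi> g) (at 0)"
proof -
  note sd = smooth_data[OF assms(1)]
  have p0: "\<And>x. \<phi> (x + 1) = \<phi> x" using sd(1) by blast
  have d0: "\<And>x. DERIV \<phi> x :> deriv \<phi> x" using sd(2) by blast
  have d1: "\<And>x. DERIV (deriv \<phi>) x :> deriv (deriv \<phi>) x" using sd(3) by blast
  have d2: "\<And>x. DERIV (deriv (deriv \<phi>)) x :> deriv (deriv (deriv \<phi>)) x" using sd(4) by blast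
  have p1: "\<And>x. deriv \<phi> (x + 1) = deriv \<phi> x" using sd(6) by blast
  have p2: "\<And>x. deriv (deriv \<phi>) (x + 1) = deriv (deriv \<phi>) x" using sd(7) by blast
  obtain M0 where M0: "\<And>x. \<bar>\<phi> x\<bar> \<le> M0" using smooth_bounds(1)[OF assms(1)] by blast
  obtain B0 where B0: "\<And>x. \<bar>deriv \<phi> x\<bar> \<le> B0" using smooth_bounds(2)[OF assms(1)] by blast
  obtain B where B: "\<And>x. \<bar>deriv (deriv \<phi>) x\<bar> \<le> B" using smooth_bounds(3)[OF assms(1)] by blast
  obtain B3 where B3: "\<And>x. \<bar>deriv (deriv (deriv \<phi>)) x\<bar> \<le> B3" using smooth_bounds(4)[OF assms(1)] by blast
  interpret fs: flow_setup \<phi> "deriv \<phi>" "deriv (deriv \<phi>)" "deriv (deriv (deriv \<phi>))" M0 B0 B B3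
    by unfold_locales (use d0 d1 d2 M0 B0 B B3 in auto)
  have g: "in_G g" by fact
  have m: "mono g" by (rule in_G_facts(1)[OF g])
  obtain W where dW: "\<And>x. DERIV W x :> \<bar>deriv (deriv \<phi>) x\<bar>"
  proof -
    have "continuous_on UNIV (\<lambda>x. \<bar>deriv (deriv \<phi>) x\<bar>)"
      by (intro continuous_intros fs.cont\<psi>2)
    then show ?thesis using antideriv_exists that by blast
  qed
  have Wm: "W x \<le> W y" if "x \<le> y" for x y by (rule W_mono[OF dW _ that]) simp
  define I where "I = integral {0..1} (\<lambda>x. \<bar>deriv (deriv \<phi>) x\<bar>)"
  have I: "I = W 1 - W 0" unfolding I_def by (rule W_integral[OF dW]) simp
  have Wper: "W (gminus g 0 + 1) - W (gminus g 0) = W 1 - W 0"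
    by (rule W_periodic[OF dW]) (simp add: p2)
  have tb: "\<bar>V0_term \<phi> g a\<bar> \<le> (W (g a) - W (gminus g a)) / 2" if a: "a \<in> jumps g" for a
    unfolding V0_term_def by (rule trapezoid_bound[OF d0 d1 dW jump_pos[OF g a]])
  have fin: "sum (\<lambda>a. \<bar>V0_term \<phi> g a\<bar>) F \<le> 1/2 * I" if F: "finite F" "F \<subseteq> jumps g" for F
  proof -
    have "sum (\<lambda>a. \<bar>V0_term \<phi> g a\<bar>) F \<le> sum (\<lambda>a. (W (g a) - W (gminus g a)) / 2) F"
      using F tb by (intro sum_mono) auto
    also have "\<dots> = 1/2 * (\<Sum>a\<in>F. W (g a) - W (gminus g a))" by (simp add: sum_divide_distrib)
    also have "\<dots> \<le> 1/2 * (W (gminus g 0 + 1) - W (gminus g 0))"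
      using jump_sum_le[OF g Wm F] by simp
    finally show ?thesis using Wper I by simp
  qed
  have S1: "(\<lambda>a. \<bar>V0_term \<phi> g a\<bar>) summable_on jumps g"
    and S2: "(\<Sum>\<^sub>\<infinity>a\<in>jumps g. \<bar>V0_term \<phi> g a\<bar>) \<le> 1/2 * I"
    using sum_bdd_summable[of "jumps g" "\<lambda>a. \<bar>V0_term \<phi> g a\<bar>", OF _ fin] by auto
  have S3: "\<bar>V0 \<phi> g\<bar> \<le> (\<Sum>\<^sub>\<infinity>a\<in>jumps g. \<bar>V0_term \<phi> g a\<bar>)"
    using norm_infsum_bound[of "V0_term \<phi> g" "jumps g"] S1 by (simp add: V0_def)
  have I0: "0 \<le> I" using I Wm[of 0 1] by simp
  have \<psi>half: "\<bar>deriv \<phi> y\<bar> \<le> I / 2" for y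
    using psi_bound[OF d0 d1 dW p0 p1 p2, of y] I by simp
  have int\<psi>: "(\<lambda>s. deriv \<phi> (g s)) integrable_on {0..1}"
    by (rule comp_mono_integrable[OF DERIV_cont_on[OF d1] m B0])
  have "\<bar>integral {0..1} (\<lambda>x. deriv \<phi> (g x))\<bar> \<le> integral {0..1} (\<lambda>x::real. I / 2)"
    using Henstock_Kurzweil_Integration.integral_norm_bound_integral[OF int\<psi>, of "\<lambda>x. I / 2"] \<psi>half
    by (simp add: integrable_continuous_interval)
  then have ib: "\<bar>integral {0..1} (\<lambda>x. deriv \<phi> (g x))\<bar> \<le> I / 2" by simp
  have S4: "\<bar>Vbeta \<beta> \<phi> g\<bar> \<le> (1/2 + \<beta>) * I"
  proof -
    have "\<bar>Vbeta \<beta> \<phi> g\<bar> = \<bar>V0 \<phi> g + \<beta> * integral {0..1} (\<lambda>x. deriv \<phi> (g x))\<bar>"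
      by (simp add: Vbeta_def)
    also have "\<dots> \<le> \<bar>V0 \<phi> g\<bar> + \<bar>\<beta> * integral {0..1} (\<lambda>x. deriv \<phi> (g x))\<bar>"
      by (rule abs_triangle_ineq)
    also have "\<dots> = \<bar>V0 \<phi> g\<bar> + \<beta> * \<bar>integral {0..1} (\<lambda>x. deriv \<phi> (g x))\<bar>"
      using assms(2) by (simp add: abs_mult)
    also have "\<dots> \<le> 1/2 * I + \<beta> * (I / 2)"
      using S3 S2 ib assms(2) by (intro add_mono mult_left_mono) auto
    also have "\<dots> \<le> (1/2 + \<beta>) * I" using I0 assms(2) by (simp add: algebra_simps)
    finally show ?thesis .
  qed
  have B0nn: "0 \<le> B" using fs.consts_nonneg by simp
  have D1: "DERIV (\<lambda>t. Ybeta \<beta> (flow \<phi> t) g) 0 :> Vbeta \<beta> \<phi> g"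
  proof (rule abstract_deriv[OF g d0 fs.Lip\<psi> B0 S1 zero_less_one _ B0nn, of "B * M0 + fs.K2" "flow \<phi>" fs.Lam])
    show "0 \<le> B * M0 + fs.K2" using fs.consts_nonneg fs.K2_nonneg by simp
    fix t y z :: real assume t: "\<bar>t\<bar> < 1"
    show "DERIV (flow \<phi> t) y :> exp (fs.Lam t y)" by (rule fs.flow_deriv_y)
    show "\<bar>fs.Lam t y - t * deriv \<phi> y\<bar> \<le> (B * M0 + fs.K2) * t\<^sup>2"
    proof -
      have "(B * M0) * t\<^sup>2 \<le> (B * M0 + fs.K2) * t\<^sup>2" using fs.K2_nonneg by (intro mult_right_mono) auto
      then show ?thesis using fs.G1[of t y] by linarith
    qed
    have "\<bar>(fs.Lam t y - t * deriv \<phi> y) - (fs.Lam t z - t * deriv \<phi> z)\<bar> \<le> fs.K2 * t\<^sup>2 * \<bar>y - z\<bar>"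
      using t by (intro fs.G2) simp
    also have "\<dots> \<le> (B * M0 + fs.K2) * t\<^sup>2 * \<bar>y - z\<bar>"
      using fs.consts_nonneg by (intro mult_right_mono) auto
    finally show "\<bar>(fs.Lam t y - t * deriv \<phi> y) - (fs.Lam t z - t * deriv \<phi> z)\<bar> \<le> (B * M0 + fs.K2) * t\<^sup>2 * \<bar>y - z\<bar>" .
  qed
  have D2: "DERIV (\<lambda>t. Ybeta \<beta> (lin_map \<phi> t) g) 0 :> Vbeta \<beta> \<phi> g"
    by (rule lin_map_deriv[OF g d0 fs.Lip\<psi> B0 S1 B0nn])
  show ?thesis using S1 S2 S3 S4 D1 D2 by (simp add: I_def)
qed


end
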